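(* Let $G$ be a directed graph with $n$ vertices and distinct vertices $s,t$, and let $k\ge1$. The set $J(L^* )$ of join-irreducible elements of $L^*$ has size $O(kn)$ and is given by $J(L^* )=\bigcup_{i=1}^kJ_i$, where $J_i=\{(\underbrace{0_L,\dots,0_L}_{i-1},\underbrace{p,\dots,p}_{k-i+1}):p\in J(L)\}$.
   Context: An $s$-$t$ cut of $G$ is a set $X\subseteq E(G)$ such that removing $X$ leaves no directed $s$-$t$ path; $\Gamma_G(s,t)$ is the set of $s$-$t$ cuts of minimum cardinality. Fix a maximum-size collection $\mathcal P$ of pairwise edge-disjoint directed $s$-$t$ paths (each minimum $s$-$t$ cut contains exactly one edge of each path in $\mathcal P$). For $X,Y\in\Gamma_G(s,t)$, $S_{\min}(X\cup Y)$ (resp. $S_{\max}(X\cup Y)$) consists, for each $p\in\mathcal P$, of the edge of $(X\cup Y)\cap p$ occurring first (resp. last) along $p$. $X\le Y$ means every directed $s$-$t$ path meets an edge of $X$ at or before an edge of $Y$. $L$ denotes the distributive lattice $(\Gamma_G(s,t),\le)$ with join $X\vee Y=S_{\max}(X\cup Y)$ and meet $X\wedge Y=S_{\min}(X\cup Y)$; $0_L$ is its least element (the leftmost minimum $s$-$t$ cut). An element $x$ of a lattice is join-irreducible if it is not the least element and cannot be written as $y\vee z$ with $y,z\ne x$; $J(L)$ is the set of join-irreducibles of $L$. $U^k_{\mathrm{lr}}$ is the set of $k$-tuples $[X_1,\dots,X_k]$ of elements of $\Gamma_G(s,t)$ with $X_i\le X_j$ for all $i<j$, and $L^*$ is the lattice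 on $U^k_{\mathrm{lr}}$ with componentwise order, join $[S_{\max}(X_i\cup Y_i)]_i$ and meet $[S_{\min}(X_i\cup Y_i)]_i$. *)

theory Defs
  imports Main
begin

text \<open>A finite directed multigraph: vertex set V, edge set E (edge identifiers),
  each edge e goes from src e to dst e. Vertices and edges are natural numbers.\<close>

definition digraph :: "nat set \<Rightarrow> nat set \<Rightarrow> (nat \<Rightarrow> nat) \<Rightarrow> (nat \<Rightarrow> nat) \<Rightarrow> bool" where
  "digraph V E src dst \<longleftrightarrow> finite V \<and> finite E \<and> (\<forall>e\<in>E. src e \<in> V \<and> dst e \<in> V)"

definition is_path :: "nat set \<Rightarrow> (nat \<Rightarrow> nat) \<Rightarrow> (nat \<Rightarrow> nat) \<Rightarrow> nat \<Rightarrow> nat \<Rightarrow> nat list \<Rightarrow> bool" where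
  "is_path E src dst s t p \<longleftrightarrow>
     p \<noteq> [] \<and> set p \<subseteq> E \<and> src (hd p) = s \<and> dst (last p) = t \<and>
     (\<forall>i. Suc i < length p \<longrightarrow> dst (p ! i) = src (p ! Suc i)) \<and>
     distinct (s # map dst p)"

definition is_cut :: "nat set \<Rightarrow> (nat \<Rightarrow> nat) \<Rightarrow> (nat \<Rightarrow> nat) \<Rightarrow> nat \<Rightarrow> nat \<Rightarrow> nat set \<Rightarrow> bool" where
  "is_cut E src dst s t X \<longleftrightarrow> X \<subseteq> E \<and> (\<forall>p. is_path E src dst s t p \<longrightarrow> set p \<inter> X \<noteq> {})"

definition min_cuts :: "nat set \<Rightarrow> (nat \<Rightarrow> nat) \<Rightarrow> (nat \<Rightarrow> nat) \<Rightarrow> nat \<Rightarrow> nat \<Rightarrow> nat set set" where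
  "min_cuts E src dst s t =
     {X. is_cut E src dst s t X \<and> (\<forall>Y. is_cut E src dst s t Y \<longrightarrow> card X \<le> card Y)}"

definition path_packing :: "nat set \<Rightarrow> (nat \<Rightarrow> nat) \<Rightarrow> (nat \<Rightarrow> nat) \<Rightarrow> nat \<Rightarrow> nat \<Rightarrow> nat list set \<Rightarrow> bool" where
  "path_packing E src dst s t Q \<longleftrightarrow> finite Q \<and> (\<forall>p\<in>Q. is_path E src dst s t p) \<and>
     (\<forall>p\<in>Q. \<forall>q\<in>Q. p \<noteq> q \<longrightarrow> set p \<inter> set q = {})"

definition max_path_packing :: "nat set \<Rightarrow> (nat \<Rightarrow> nat) \<Rightarrow> (nat \<Rightarrow> nat) \<Rightarrow> nat \<Rightarrow> nat \<Rightarrow> nat list set \<Rightarrow> bool" where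
  "max_path_packing E src dst s t P \<longleftrightarrow> path_packing E src dst s t P \<and>
     (\<forall>Q. path_packing E src dst s t Q \<longrightarrow> card Q \<le> card P)"

definition S_min :: "nat list set \<Rightarrow> nat set \<Rightarrow> nat set" where
  "S_min P Z = (\<lambda>p. hd (filter (\<lambda>e. e \<in> Z) p)) ` P"

definition S_max :: "nat list set \<Rightarrow> nat set \<Rightarrow> nat set" where
  "S_max P Z = (\<lambda>p. last (filter (\<lambda>e. e \<in> Z) p)) ` P"

definition cut_le :: "nat set \<Rightarrow> (nat \<Rightarrow> nat) \<Rightarrow> (nat \<Rightarrow> nat) \<Rightarrow> nat \<Rightarrow> nat \<Rightarrow> nat set \<Rightarrow> nat set \<Rightarrow> bool" where
  "cut_le E src dst s t X Y \<longleftrightarrow>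
     (\<forall>p. is_path E src dst s t p \<longrightarrow> (\<exists>i<length p. p ! i \<in> X \<and> (\<forall>j<i. p ! j \<notin> Y)))"

definition cut_join :: "nat list set \<Rightarrow> nat set \<Rightarrow> nat set \<Rightarrow> nat set" where
  "cut_join P X Y = S_max P (X \<union> Y)"

definition cut_meet :: "nat list set \<Rightarrow> nat set \<Rightarrow> nat set \<Rightarrow> nat set" where
  "cut_meet P X Y = S_min P (X \<union> Y)"

definition zero_L :: "nat set \<Rightarrow> (nat \<Rightarrow> nat) \<Rightarrow> (nat \<Rightarrow> nat) \<Rightarrow> nat \<Rightarrow> nat \<Rightarrow> nat set" where
  "zero_L E src dst s t = (THE X. X \<in> min_cuts E src dst s t \<and>
      (\<forall>Y\<in>min_cuts E src dst s t. cut_le E src dst s t X Y))"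

definition join_irreducible :: "'a set \<Rightarrow> ('a \<Rightarrow> 'a \<Rightarrow> bool) \<Rightarrow> ('a \<Rightarrow> 'a \<Rightarrow> 'a) \<Rightarrow> 'a \<Rightarrow> bool" where
  "join_irreducible A le join x \<longleftrightarrow> x \<in> A \<and> \<not> (\<forall>y\<in>A. le x y) \<and>
     \<not> (\<exists>y\<in>A. \<exists>z\<in>A. y \<noteq> x \<and> z \<noteq> x \<and> join y z = x)"

definition J_L :: "nat set \<Rightarrow> (nat \<Rightarrow> nat) \<Rightarrow> (nat \<Rightarrow> nat) \<Rightarrow> nat \<Rightarrow> nat \<Rightarrow> nat list set \<Rightarrow> nat set set" where
  "J_L E src dst s t P = {x. join_irreducible (min_cuts E src dst s t) (cut_le E src dst s t) (cut_join P) x}"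

definition U_lr :: "nat set \<Rightarrow> (nat \<Rightarrow> nat) \<Rightarrow> (nat \<Rightarrow> nat) \<Rightarrow> nat \<Rightarrow> nat \<Rightarrow> nat \<Rightarrow> nat set list set" where
  "U_lr E src dst s t k = {xs. length xs = k \<and> set xs \<subseteq> min_cuts E src dst s t \<and>
      (\<forall>i j. i < j \<and> j < k \<longrightarrow> cut_le E src dst s t (xs ! i) (xs ! j))}"

definition star_le :: "nat set \<Rightarrow> (nat \<Rightarrow> nat) \<Rightarrow> (nat \<Rightarrow> nat) \<Rightarrow> nat \<Rightarrow> nat \<Rightarrow> nat set list \<Rightarrow> nat set list \<Rightarrow> bool" where
  "star_le E src dst s t xs ys \<longleftrightarrow> length xs = length ys \<and>
      (\<forall>i<length xs. cut_le E src dst s t (xs ! i) (ys ! i))"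

definition star_join :: "nat list set \<Rightarrow> nat set list \<Rightarrow> nat set list \<Rightarrow> nat set list" where
  "star_join P xs ys = map2 (cut_join P) xs ys"

definition star_meet :: "nat list set \<Rightarrow> nat set list \<Rightarrow> nat set list \<Rightarrow> nat set list" where
  "star_meet P xs ys = map2 (cut_meet P) xs ys"

definition J_star :: "nat set \<Rightarrow> (nat \<Rightarrow> nat) \<Rightarrow> (nat \<Rightarrow> nat) \<Rightarrow> nat \<Rightarrow> nat \<Rightarrow> nat list set \<Rightarrow> nat \<Rightarrow> nat set list set" where
  "J_star E src dst s t P k = {xs. join_irreducible (U_lr E src dst s t k) (star_le E src dst s t) (star_join P) xs}"

definition J_i :: "nat set \<Rightarrow> (nat \<Rightarrow> nat) \<Rightarrow> (nat \<Rightarrow> nat) \<Rightarrow> nat \<Rightarrow> nat \<Rightarrow> nat list set \<Rightarrow> nat \<Rightarrow> nat \<Rightarrow> nat set list set" where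
  "J_i E src dst s t P k i = {replicate (i - 1) (zero_L E src dst s t) @ replicate (k - i + 1) p | p. p \<in> J_L E src dst s t P}"

end

theory Submission
  imports Defs
begin

fun gw :: "('a \<Rightarrow> nat) \<Rightarrow> ('a \<Rightarrow> nat) \<Rightarrow> ('a \<Rightarrow> bool) \<Rightarrow> nat \<Rightarrow> 'a list \<Rightarrow> nat \<Rightarrow> bool" where
  "gw st en ok u [] v = (u = v)"
| "gw st en ok u (a # r) v = (ok a \<and> st a = u \<and> gw st en ok (en a) r v)"

lemma gw_append: "gw st en ok u (a @ b) v \<longleftrightarrow> (\<exists>w. gw st en ok u a w \<and> gw st en ok w b v)"
  by (induction a arbitrary: u) auto

lemma gw_ok: "gw st en ok u r v \<Longrightarrow> a \<in> set r \<Longrightarrow> ok a"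
  by (induction r arbitrary: u) auto

lemma gw_shortcut: "gw st en ok u r v \<Longrightarrow> \<exists>r'. gw st en ok u r' v \<and> set r' \<subseteq> set r \<and> distinct (u # map en r')"
proof (induction r arbitrary: u)
  case Nil
  then show ?case by auto
next
  case (Cons a r)
  then have ok: "ok a" "st a = u" and g: "gw st en ok (en a) r v" by auto
  from Cons.IH[OF g] obtain r' where r': "gw st en ok (en a) r' v" "set r' \<subseteq> set r" "distinct (en a # map en r')" by blast
  show ?case
  proof (cases "u = en a")
    case True
    then show ?thesis using r' by auto
  next
    case False
    show ?thesis
    proof (cases "u \<in> set (map en r')")
      case True
      then obtain b where b: "b \<in> set r'" "en b = u" by auto
      then obtain r1 r2 where sp: "r' = r1 @ b # r2" by (meson split_list)
      from r'(1) sp have "gw st en ok u r2 v" using b by (auto simp: gw_append)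
      moreover have "distinct (u # map en r2)" using r'(3) sp b by auto
      moreover have "set r2 \<subseteq> set (a # r)" using r'(2) sp by auto
      ultimately show ?thesis by blast
    next
      case F2: False
      have "gw st en ok u (a # r') v" using ok r' by auto
      moreover have "distinct (u # map en (a # r'))" using F2 False r'(3) by auto
      ultimately show ?thesis using r'(2) by (intro exI[of _ "a # r'"]) auto
    qed
  qed
qed

lemma gw_rtrancl: "(u, v) \<in> {(st a, en a) | a. ok a}\<^sup>* \<Longrightarrow> \<exists>r. gw st en ok u r v"
proof (induction rule: rtrancl_induct)
  case base
  then show ?case by (intro exI[of _ "[]"]) auto
next
  case (step y z)
  then obtain r a where "gw st en ok u r y" "ok a" "y = st a" "z = en a" by auto
  then show ?case by (intro exI[of _ "r @ [a]"]) (auto simp: gw_append)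
qed

lemma gw_iff: "r \<noteq> [] \<Longrightarrow> gw st en ok u r v \<longleftrightarrow> (\<forall>a\<in>set r. ok a) \<and> st (hd r) = u \<and> en (last r) = v \<and>
   (\<forall>i. Suc i < length r \<longrightarrow> en (r ! i) = st (r ! Suc i))"
proof (induction r arbitrary: u)
  case Nil
  then show ?case by simp
next
  case (Cons a r)
  show ?case
  proof (cases "r = []")
    case True
    then show ?thesis by auto
  next
    case False
    have e: "(\<forall>i. Suc i < length (a # r) \<longrightarrow> en ((a # r) ! i) = st ((a # r) ! Suc i)) \<longleftrightarrow>
      en a = st (hd r) \<and> (\<forall>i. Suc i < length r \<longrightarrow> en (r ! i) = st (r ! Suc i))"
    proof
      assume H: "\<forall>i. Suc i < length (a # r) \<longrightarrow> en ((a # r) ! i) = st ((a # r) ! Suc i)"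
      have "en a = st (hd r)" using H[rule_format, of 0] False by (simp add: hd_conv_nth)
      moreover have "\<forall>i. Suc i < length r \<longrightarrow> en (r ! i) = st (r ! Suc i)"
        using H by (metis Suc_less_eq length_Cons nth_Cons_Suc)
      ultimately show "en a = st (hd r) \<and> (\<forall>i. Suc i < length r \<longrightarrow> en (r ! i) = st (r ! Suc i))" by blast
    next
      assume H: "en a = st (hd r) \<and> (\<forall>i. Suc i < length r \<longrightarrow> en (r ! i) = st (r ! Suc i))"
      show "\<forall>i. Suc i < length (a # r) \<longrightarrow> en ((a # r) ! i) = st ((a # r) ! Suc i)"
      proof (intro allI impI)
        fix i assume "Suc i < length (a # r)"
        then show "en ((a # r) ! i) = st ((a # r) ! Suc i)"
          using H False by (cases i) (auto simp: hd_conv_nth)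
      qed
    qed
    show ?thesis using Cons.IH[OF False, of "en a"] False e by auto
  qed
qed

lemma is_path_iff: "is_path E src dst s t p \<longleftrightarrow> p \<noteq> [] \<and> gw src dst (\<lambda>e. e \<in> E) s p t \<and> distinct (s # map dst p)"
  unfolding is_path_def using gw_iff[of p src dst "\<lambda>e. e \<in> E" s t] by auto

definition ple :: "'a list \<Rightarrow> 'a \<Rightarrow> 'a \<Rightarrow> bool" where
  "ple p e f \<longleftrightarrow> (\<exists>c d. p = c @ e # d \<and> f \<in> set (e # d))"

lemma ple_refl: "e \<in> set p \<Longrightarrow> ple p e e"
proof -
  assume "e \<in> set p"
  then obtain c d where "p = c @ e # d" by (meson split_list)
  then show ?thesis unfolding ple_def by auto
qed

lemma ple_set: "ple p e f \<Longrightarrow> e \<in> set p \<and> f \<in> set p"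
  unfolding ple_def by auto

lemma ple_total: "e \<in> set p \<Longrightarrow> f \<in> set p \<Longrightarrow> ple p e f \<or> ple p f e"
proof -
  assume "e \<in> set p" "f \<in> set p"
  then obtain c d where p: "p = c @ e # d" by (meson split_list)
  show ?thesis
  proof (cases "f \<in> set (e # d)")
    case True then show ?thesis using p unfolding ple_def by blast
  next
    case False
    then have "f \<in> set c" using p \<open>f \<in> set p\<close> by auto
    then obtain c1 c2 where "c = c1 @ f # c2" by (meson split_list)
    then have "p = c1 @ f # (c2 @ e # d)" using p by auto
    then have "ple p f e" unfolding ple_def by (intro exI[of _ c1] exI[of _ "c2 @ e # d"]) auto
    then show ?thesis by blast
  qed
qed

lemma ple_split: "ple p e f \<Longrightarrow> e \<noteq> f \<Longrightarrow> \<exists>c d1 d2. p = c @ e # d1 @ f # d2"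
proof -
  assume "ple p e f" "e \<noteq> f"
  then obtain c d where "p = c @ e # d" "f \<in> set d" unfolding ple_def by auto
  moreover obtain d1 d2 where "d = d1 @ f # d2" using \<open>f \<in> set d\<close> by (meson split_list)
  ultimately show ?thesis by blast
qed

lemma distinct_split_unique: "distinct p \<Longrightarrow> p = c @ x # d \<Longrightarrow> p = c' @ x # d' \<Longrightarrow> c = c' \<and> d = d'"
  by (metis append_Cons_eq_iff distinct.simps(2) distinct_append not_distinct_conv_prefix)

lemma ple_antisym: "distinct p \<Longrightarrow> ple p e f \<Longrightarrow> ple p f e \<Longrightarrow> e = f"
proof (rule ccontr)
  assume d: "distinct p" and a: "ple p e f" "ple p f e" "e \<noteq> f"
  obtain c d1 d2 where p: "p = c @ e # d1 @ f # d2" using ple_split[OF a(1) a(3)] by blast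
  from a(2) obtain c' d' where p': "p = c' @ f # d'" "e \<in> set (f # d')" unfolding ple_def by blast
  have pp: "p = (c @ e # d1) @ f # d2" using p by simp
  have "d' = d2" using distinct_split_unique[OF d pp p'(1)] by blast
  then have "e \<in> set d2" using p'(2) a(3) by auto
  then show False using d p by auto
qed

lemma ple_trans: "distinct p \<Longrightarrow> ple p e f \<Longrightarrow> ple p f g \<Longrightarrow> ple p e g"
proof -
  assume d: "distinct p" and a: "ple p e f" "ple p f g"
  from a(1) obtain c d0 where p: "p = c @ e # d0" "f \<in> set (e # d0)" unfolding ple_def by blast
  from a(2) obtain c' d' where p': "p = c' @ f # d'" "g \<in> set (f # d')" unfolding ple_def by blast
  have "set (f # d') \<subseteq> set (e # d0)"
  proof (cases "f = e")
    case True then show ?thesis using distinct_split_unique[OF d p(1)] p' by auto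
  next
    case False
    then obtain d1 d2 where "d0 = d1 @ f # d2" using p(2) by (meson set_ConsD split_list)
    then have "p = (c @ e # d1) @ f # d2" using p by simp
    then have "d' = d2" using distinct_split_unique[OF d _ p'(1)] by blast
    then show ?thesis using \<open>d0 = d1 @ f # d2\<close> by auto
  qed
  then show ?thesis using p p' unfolding ple_def by blast
qed

lemma gw_mono: "gw st en ok u r v \<Longrightarrow> (\<forall>a\<in>set r. ok a \<longrightarrow> ok' a) \<Longrightarrow> gw st en ok' u r v"
  by (induction r arbitrary: u) auto

lemma gw_exit: "gw st en ok u q w \<Longrightarrow> u \<in> S \<Longrightarrow> w \<notin> S \<Longrightarrow> \<exists>a\<in>set q. st a \<in> S \<and> en a \<notin> S"
proof (induction q arbitrary: u)
  case Nil
  then show ?case by simp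
next
  case (Cons a q)
  show ?case
  proof (cases "en a \<in> S")
    case True
    then show ?thesis using Cons.IH[of "en a"] Cons.prems by auto
  next
    case False
    then show ?thesis using Cons.prems by auto
  qed
qed

definition outd :: "(nat \<Rightarrow> nat) \<Rightarrow> nat set \<Rightarrow> nat \<Rightarrow> nat" where
  "outd f F v = card {e\<in>F. f e = v}"

definition net :: "(nat \<Rightarrow> nat) \<Rightarrow> (nat \<Rightarrow> nat) \<Rightarrow> nat set \<Rightarrow> nat \<Rightarrow> int" where
  "net src dst F v = int (outd src F v) - int (outd dst F v)"

lemma outd_insert: "finite F \<Longrightarrow> e \<notin> F \<Longrightarrow> outd f (insert e F) v = outd f F v + (if f e = v then 1 else 0)"
proof -
  assume a: "finite F" "e \<notin> F"
  have "{x\<in>insert e F. f x = v} = (if f e = v then insert e {x\<in>F. f x = v} else {x\<in>F. f x = v})" by auto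
  then show ?thesis unfolding outd_def using a by auto
qed

lemma outd_remove: "finite F \<Longrightarrow> e \<in> F \<Longrightarrow> int (outd f (F - {e}) v) = int (outd f F v) - (if f e = v then 1 else 0)"
proof -
  assume a: "finite F" "e \<in> F"
  have "{x\<in>F - {e}. f x = v} = {x\<in>F. f x = v} - {e}" by auto
  moreover have fin: "finite {x\<in>F. f x = v}" using a by auto
  moreover have "f e = v \<Longrightarrow> card {x\<in>F. f x = v} > 0" using a fin by (auto simp: card_gt_0_iff)
  ultimately show ?thesis unfolding outd_def using a
    by (cases "f e = v") (simp_all add: card_Diff_singleton of_nat_diff)
qed

lemma outd_diff: "finite F \<Longrightarrow> A \<subseteq> F \<Longrightarrow> int (outd f (F - A) v) = int (outd f F v) - int (outd f A v)"
proof -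
  assume a: "finite F" "A \<subseteq> F"
  have "{x\<in>F - A. f x = v} = {x\<in>F. f x = v} - {x\<in>A. f x = v}" by auto
  moreover have "{x\<in>A. f x = v} \<subseteq> {x\<in>F. f x = v}" using a by auto
  moreover have "finite {x\<in>F. f x = v}" using a by auto
  ultimately show ?thesis unfolding outd_def by (simp add: card_Diff_subset card_mono finite_subset of_nat_diff)
qed

lemma net_insert: "finite F \<Longrightarrow> e \<notin> F \<Longrightarrow> net src dst (insert e F) v = net src dst F v + (if src e = v then 1 else 0) - (if dst e = v then 1 else 0)"
  unfolding net_def by (simp add: outd_insert)

lemma net_remove: "finite F \<Longrightarrow> e \<in> F \<Longrightarrow> net src dst (F - {e}) v = net src dst F v - (if src e = v then 1 else 0) + (if dst e = v then 1 else 0)"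
  unfolding net_def by (simp add: outd_remove)

lemma net_diff: "finite F \<Longrightarrow> A \<subseteq> F \<Longrightarrow> net src dst (F - A) v = net src dst F v - net src dst A v"
  unfolding net_def by (simp add: outd_diff)

lemma net_walk: "gw src dst ok u q w \<Longrightarrow> distinct q \<Longrightarrow> net src dst (set q) v = (if u = v then 1 else 0) - (if w = v then 1 else 0)"
proof (induction q arbitrary: u)
  case Nil
  then show ?case by (simp add: net_def outd_def)
next
  case (Cons a q)
  then have "net src dst (set q) v = (if dst a = v then 1 else 0) - (if w = v then 1 else 0)" by auto
  moreover have "a \<notin> set q" "src a = u" using Cons.prems by auto
  ultimately show ?case by (simp add: net_insert)
qed

lemma outd_UN: "finite I \<Longrightarrow> \<forall>i\<in>I. finite (A i) \<Longrightarrow> \<forall>i\<in>I. \<forall>j\<in>I. i \<noteq> j \<longrightarrow> A i \<inter> A j = {} \<Longrightarrow>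
   outd f (\<Union>(A ` I)) v = (\<Sum>i\<in>I. outd f (A i) v)"
proof -
  assume a: "finite I" "\<forall>i\<in>I. finite (A i)" "\<forall>i\<in>I. \<forall>j\<in>I. i \<noteq> j \<longrightarrow> A i \<inter> A j = {}"
  have "{x\<in>\<Union>(A ` I). f x = v} = (\<Union>i\<in>I. {x\<in>A i. f x = v})" by auto
  moreover have "card (\<Union>i\<in>I. {x\<in>A i. f x = v}) = (\<Sum>i\<in>I. card {x\<in>A i. f x = v})"
    by (rule card_UN_disjoint) (use a in auto)
  ultimately show ?thesis unfolding outd_def by simp
qed

lemma net_UN: "finite I \<Longrightarrow> \<forall>i\<in>I. finite (A i) \<Longrightarrow> \<forall>i\<in>I. \<forall>j\<in>I. i \<noteq> j \<longrightarrow> A i \<inter> A j = {} \<Longrightarrow>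
   net src dst (\<Union>(A ` I)) v = (\<Sum>i\<in>I. net src dst (A i) v)"
  unfolding net_def by (simp add: outd_UN sum_subtractf)

lemma sum_outd: "finite F \<Longrightarrow> finite R \<Longrightarrow> (\<Sum>v\<in>R. outd f F v) = card {e\<in>F. f e \<in> R}"
proof -
  assume a: "finite F" "finite R"
  have "{e\<in>F. f e \<in> R} = (\<Union>v\<in>R. {e\<in>F. f e = v})" by auto
  moreover have "card (\<Union>v\<in>R. {e\<in>F. f e = v}) = (\<Sum>v\<in>R. card {e\<in>F. f e = v})"
    by (rule card_UN_disjoint) (use a in auto)
  ultimately show ?thesis unfolding outd_def by simp
qed

locale mc =
  fixes V :: "nat set" and E :: "nat set" and src dst :: "nat \<Rightarrow> nat" and s t :: nat and P :: "nat list set"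
  assumes dg: "digraph V E src dst" and sV: "s \<in> V" and tV: "t \<in> V" and st: "s \<noteq> t"
    and mp: "max_path_packing E src dst s t P"
begin

abbreviation "ew u p v \<equiv> gw src dst (\<lambda>e. e \<in> E) u p v"
abbreviation "L \<equiv> min_cuts E src dst s t"
abbreviation "m \<equiv> card P"
definition "F0 = \<Union>(set ` P)"

lemma finE: "finite E" and finV: "finite V" using dg unfolding digraph_def by auto
lemma finP: "finite P" using mp unfolding max_path_packing_def path_packing_def by auto
lemma P_path: "p \<in> P \<Longrightarrow> is_path E src dst s t p"
  using mp unfolding max_path_packing_def path_packing_def by auto
lemma P_disj: "p \<in> P \<Longrightarrow> q \<in> P \<Longrightarrow> p \<noteq> q \<Longrightarrow> set p \<inter> set q = {}"
  using mp unfolding max_path_packing_def path_packing_def by auto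
lemma P_max: "path_packing E src dst s t Q \<Longrightarrow> card Q \<le> m"
  using mp unfolding max_path_packing_def by auto

lemma P_props: assumes "p \<in> P" shows "p \<noteq> [] \<and> ew s p t \<and> distinct (s # map dst p) \<and> distinct p \<and> set p \<subseteq> E"
proof -
  have "is_path E src dst s t p" using P_path assms by auto
  then show ?thesis unfolding is_path_iff using gw_ok[of src dst "\<lambda>e. e \<in> E" s p t]
    by (auto simp: distinct_map)
qed

lemma F0_sub: "F0 \<subseteq> E" using P_props unfolding F0_def by auto
lemma finF0: "finite F0" using F0_sub finE finite_subset by auto

lemma walk_hits: assumes "is_cut E src dst s t X" "ew s w t" shows "set w \<inter> X \<noteq> {}"
proof -
  obtain r where r: "ew s r t" "set r \<subseteq> set w" "distinct (s # map dst r)" using gw_shortcut[OF assms(2)] by blast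
  have "r \<noteq> []" using r(1) st by auto
  then have "is_path E src dst s t r" using r is_path_iff by blast
  then have "set r \<inter> X \<noteq> {}" using assms(1) unfolding is_cut_def by auto
  then show ?thesis using r(2) by auto
qed

lemma cut_ge: assumes "is_cut E src dst s t Y" shows "m \<le> card Y"
proof -
  have fY: "finite Y" using assms finE unfolding is_cut_def using finite_subset by auto
  have "\<forall>p\<in>P. 1 \<le> card (Y \<inter> set p)"
  proof
    fix p assume "p \<in> P"
    then have "Y \<inter> set p \<noteq> {}" using assms P_path unfolding is_cut_def by auto
    then show "1 \<le> card (Y \<inter> set p)" using fY by (simp add: Suc_leI card_gt_0_iff)
  qed
  then have "m \<le> (\<Sum>p\<in>P. card (Y \<inter> set p))" using sum_mono[of P "\<lambda>_. 1::nat"] by auto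
  also have "\<dots> = card (\<Union>p\<in>P. Y \<inter> set p)"
    by (rule card_UN_disjoint[symmetric]) (use finP fY P_disj in auto)
  also have "\<dots> \<le> card Y" using fY by (intro card_mono) auto
  finally show ?thesis .
qed

lemma FD: "finite F \<Longrightarrow> F \<subseteq> E \<Longrightarrow> (\<forall>v. v \<noteq> s \<and> v \<noteq> t \<longrightarrow> net src dst F v = 0) \<Longrightarrow> int k \<le> net src dst F s \<Longrightarrow>
   \<exists>Q. path_packing E src dst s t Q \<and> card Q = k \<and> (\<forall>q\<in>Q. set q \<subseteq> F)"
proof (induction k arbitrary: F)
  case 0
  then show ?case by (intro exI[of _ "{}"]) (auto simp: path_packing_def)
next
  case (Suc k)
  let ?r = "{(src e, dst e) | e. e \<in> F}"
  define R where "R = {v. (s, v) \<in> ?r\<^sup>*}"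
  have tR: "t \<in> R"
  proof (rule ccontr)
    assume ntR: "t \<notin> R"
    have sR: "s \<in> R" unfolding R_def by auto
    have Rsub: "R \<subseteq> insert s (dst ` F)"
    proof
      fix v assume "v \<in> R"
      then have "(s, v) \<in> ?r\<^sup>*" unfolding R_def by auto
      then show "v \<in> insert s (dst ` F)" by (cases rule: rtranclE) auto
    qed
    have finR: "finite R" using Rsub Suc.prems(1) finite_subset by auto
    have clo: "\<And>e. e \<in> F \<Longrightarrow> src e \<in> R \<Longrightarrow> dst e \<in> R"
    proof -
      fix e assume "e \<in> F" "src e \<in> R"
      then have "(s, src e) \<in> ?r\<^sup>*" "(src e, dst e) \<in> ?r" unfolding R_def by auto
      then show "dst e \<in> R" unfolding R_def by (meson mem_Collect_eq rtrancl.rtrancl_into_rtrancl)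
    qed
    have "(\<Sum>v\<in>R. net src dst F v) = int (card {e\<in>F. src e \<in> R}) - int (card {e\<in>F. dst e \<in> R})"
    proof -
      have "(\<Sum>v\<in>R. int (outd src F v)) = int (card {e\<in>F. src e \<in> R})"
        using sum_outd[OF Suc.prems(1) finR, of src] by (simp flip: of_nat_sum)
      moreover have "(\<Sum>v\<in>R. int (outd dst F v)) = int (card {e\<in>F. dst e \<in> R})"
        using sum_outd[OF Suc.prems(1) finR, of dst] by (simp flip: of_nat_sum)
      ultimately show ?thesis unfolding net_def by (simp add: sum_subtractf)
    qed
    also have "\<dots> \<le> 0"
    proof -
      have "card {e\<in>F. src e \<in> R} \<le> card {e\<in>F. dst e \<in> R}"
        using clo Suc.prems(1) by (intro card_mono) auto
      then show ?thesis by simp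
    qed
    finally have le0: "(\<Sum>v\<in>R. net src dst F v) \<le> 0" .
    have "(\<Sum>v\<in>R. net src dst F v) = net src dst F s + (\<Sum>v\<in>R - {s}. net src dst F v)"
      using sR finR by (simp add: sum.remove)
    also have "(\<Sum>v\<in>R - {s}. net src dst F v) = 0"
      using Suc.prems(3) ntR by (intro sum.neutral) auto
    finally show False using le0 Suc.prems(4) by simp
  qed
  then obtain r where "gw src dst (\<lambda>e. e \<in> F) s r t"
    using gw_rtrancl[of s t src dst "\<lambda>e. e \<in> F"] unfolding R_def by auto
  then obtain q where q: "gw src dst (\<lambda>e. e \<in> F) s q t" "set q \<subseteq> set r" "distinct (s # map dst q)"
    using gw_shortcut by blast
  have qne: "q \<noteq> []" using q(1) st by auto
  have qF: "set q \<subseteq> F" using gw_ok[OF q(1)] by auto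
  have qE: "ew s q t" using gw_mono[OF q(1), of "\<lambda>e. e \<in> E"] Suc.prems(2) qF by auto
  have qp: "is_path E src dst s t q" using qne qE q(3) is_path_iff by blast
  have dq: "distinct q" using q(3) by (auto simp: distinct_map)
  define F' where "F' = F - set q"
  have netq: "\<And>v. net src dst (set q) v = (if s = v then 1 else 0) - (if t = v then 1 else 0)"
    using net_walk[OF q(1) dq] by blast
  have netF': "\<And>v. net src dst F' v = net src dst F v - net src dst (set q) v"
    unfolding F'_def using net_diff[OF Suc.prems(1) qF] by blast
  have "\<exists>Q. path_packing E src dst s t Q \<and> card Q = k \<and> (\<forall>q\<in>Q. set q \<subseteq> F')"
  proof (rule Suc.IH)
    show "finite F'" "F' \<subseteq> E" using Suc.prems unfolding F'_def by auto
    show "\<forall>v. v \<noteq> s \<and> v \<noteq> t \<longrightarrow> net src dst F' v = 0" using Suc.prems(3) netF' netq by auto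
    show "int k \<le> net src dst F' s" using Suc.prems(4) netF' netq st by auto
  qed
  then obtain Q where Q: "path_packing E src dst s t Q" "card Q = k" "\<forall>q\<in>Q. set q \<subseteq> F'" by blast
  have qQ: "q \<notin> Q"
  proof
    assume "q \<in> Q"
    then have "set q \<subseteq> F'" using Q(3) by auto
    then show False using qne unfolding F'_def by (cases q) auto
  qed
  have "path_packing E src dst s t (insert q Q)"
    using Q(1) Q(3) qp unfolding path_packing_def F'_def by blast
  moreover have "card (insert q Q) = Suc k" using Q qQ unfolding path_packing_def by auto
  moreover have "\<forall>q'\<in>insert q Q. set q' \<subseteq> F" using Q(3) qF unfolding F'_def by auto
  ultimately show ?case by blast
qed

end

context mc begin

definition rst :: "nat \<times> bool \<Rightarrow> nat" where "rst a = (if snd a then src (fst a) else dst (fst a))"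
definition ren :: "nat \<times> bool \<Rightarrow> nat" where "ren a = (if snd a then dst (fst a) else src (fst a))"
definition rok :: "nat \<times> bool \<Rightarrow> bool" where "rok a \<longleftrightarrow> fst a \<in> E \<and> (snd a \<longleftrightarrow> fst a \<notin> F0)"
definition "Sstar = {v. (s, v) \<in> {(rst a, ren a) | a. rok a}\<^sup>*}"

fun app :: "(nat \<times> bool) list \<Rightarrow> nat set \<Rightarrow> nat set" where
  "app [] F = F"
| "app (a # r) F = (if snd a then insert (fst a) (app r F) else app r F - {fst a})"

lemma app_notin: "e \<notin> fst ` set r \<Longrightarrow> (e \<in> app r F \<longleftrightarrow> e \<in> F)"
  by (induction r) auto

lemma app_fin: "finite F \<Longrightarrow> finite (app r F)"
  by (induction r) auto

lemma app_sub: "F \<subseteq> E \<Longrightarrow> \<forall>a\<in>set r. fst a \<in> E \<Longrightarrow> app r F \<subseteq> E"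
  by (induction r) auto

lemma net_app: "gw rst ren rok u r w \<Longrightarrow> distinct (map fst r) \<Longrightarrow>
  net src dst (app r F0) v = net src dst F0 v + (if u = v then 1 else 0) - (if w = v then 1 else 0)"
proof (induction r arbitrary: u)
  case Nil
  then show ?case by simp
next
  case (Cons a r)
  then have IH: "net src dst (app r F0) v = net src dst F0 v + (if ren a = v then 1 else 0) - (if w = v then 1 else 0)"
    and ra: "rok a" "rst a = u" and nr: "fst a \<notin> fst ` set r" by auto
  have fin: "finite (app r F0)" using app_fin finF0 by auto
  show ?case
  proof (cases "snd a")
    case True
    then have "fst a \<notin> F0" using ra unfolding rok_def by auto
    then have "fst a \<notin> app r F0" using app_notin[OF nr] by auto
    then show ?thesis using net_insert[OF fin, of "fst a" src dst v] IH ra True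
      unfolding rst_def ren_def by simp
  next
    case False
    then have "fst a \<in> F0" using ra unfolding rok_def by auto
    then have "fst a \<in> app r F0" using app_notin[OF nr] by auto
    then show ?thesis using net_remove[OF fin, of "fst a" src dst v] IH ra False
      unfolding rst_def ren_def by simp
  qed
qed

lemma net_F0: "net src dst F0 v = int m * ((if s = v then 1 else 0) - (if t = v then 1 else 0))"
proof -
  have "net src dst F0 v = (\<Sum>p\<in>P. net src dst (set p) v)"
    unfolding F0_def by (rule net_UN) (use finP P_disj in auto)
  also have "\<dots> = (\<Sum>p\<in>P. (if s = v then 1 else 0) - (if t = v then 1 else 0))"
  proof (rule sum.cong)
    fix p assume "p \<in> P"
    then have "ew s p t" "distinct p" using P_props by auto
    then show "net src dst (set p) v = (if s = v then 1 else 0) - (if t = v then 1 else 0)"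
      using net_walk by blast
  qed simp
  finally show ?thesis by simp
qed

lemma t_notin_S: "t \<notin> Sstar"
proof
  assume "t \<in> Sstar"
  then obtain r where "gw rst ren rok s r t" using gw_rtrancl[of s t rst ren rok] unfolding Sstar_def by auto
  then obtain r' where r': "gw rst ren rok s r' t" "distinct (s # map ren r')" using gw_shortcut by blast
  have okr: "\<forall>a\<in>set r'. rok a" using gw_ok[OF r'(1)] by auto
  have dr: "distinct r'" using r'(2) by (auto simp: distinct_map)
  have "inj_on fst (set r')"
  proof (rule inj_onI)
    fix a b assume "a \<in> set r'" "b \<in> set r'" "fst a = fst b"
    then have "rok a" "rok b" using okr by auto
    then have "snd a = snd b" using \<open>fst a = fst b\<close> unfolding rok_def by auto
    then show "a = b" using \<open>fst a = fst b\<close> by (simp add: prod_eq_iff)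
  qed
  then have dfst: "distinct (map fst r')" using dr by (simp add: distinct_map)
  define F1 where "F1 = app r' F0"
  have finF1: "finite F1" unfolding F1_def using app_fin finF0 by auto
  have F1E: "F1 \<subseteq> E" unfolding F1_def using app_sub[OF F0_sub] okr unfolding rok_def by auto
  have netF1: "\<And>v. net src dst F1 v = (int m + 1) * ((if s = v then 1 else 0) - (if t = v then 1 else 0))"
    unfolding F1_def using net_app[OF r'(1) dfst] net_F0 by (simp add: algebra_simps)
  have "\<exists>Q. path_packing E src dst s t Q \<and> card Q = m + 1 \<and> (\<forall>q\<in>Q. set q \<subseteq> F1)"
    by (rule FD[OF finF1 F1E]) (use netF1 st in auto)
  then show False using P_max by fastforce
qed

lemma s_S: "s \<in> Sstar" unfolding Sstar_def by auto

lemma S_step: assumes "rok a" "rst a \<in> Sstar" shows "ren a \<in> Sstar"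
proof -
  have "(rst a, ren a) \<in> {(rst a, ren a) | a. rok a}" using assms(1) by blast
  moreover have "(s, rst a) \<in> {(rst a, ren a) | a. rok a}\<^sup>*" using assms(2) unfolding Sstar_def by simp
  ultimately have "(s, ren a) \<in> {(rst a, ren a) | a. rok a}\<^sup>*" by (rule rtrancl_into_rtrancl[rotated])
  then show ?thesis unfolding Sstar_def by simp
qed

lemma S_fwd: assumes "e \<in> E" "e \<notin> F0" "src e \<in> Sstar" shows "dst e \<in> Sstar"
  using S_step[of "(e, True)"] assms unfolding rok_def rst_def ren_def by simp

lemma S_bwd: assumes "e \<in> F0" "dst e \<in> Sstar" shows "src e \<in> Sstar"
  using S_step[of "(e, False)"] assms F0_sub unfolding rok_def rst_def ren_def by auto

definition "Zc = {e\<in>E. src e \<in> Sstar \<and> dst e \<notin> Sstar}"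

lemma Zc_F0: "Zc \<subseteq> F0" using S_fwd unfolding Zc_def by blast

lemma Zc_cut: "is_cut E src dst s t Zc"
  unfolding is_cut_def
proof (intro conjI allI impI)
  show "Zc \<subseteq> E" unfolding Zc_def by auto
  fix q assume "is_path E src dst s t q"
  then have "ew s q t" using is_path_iff by blast
  then obtain e where "e \<in> set q" "src e \<in> Sstar" "dst e \<notin> Sstar"
    using gw_exit[of src dst _ s q t Sstar] s_S t_notin_S by blast
  moreover have "e \<in> E" using gw_ok[OF \<open>ew s q t\<close> \<open>e \<in> set q\<close>] by simp
  ultimately show "set q \<inter> Zc \<noteq> {}" unfolding Zc_def by auto
qed

lemma stay_out: "gw src dst ok u d w \<Longrightarrow> u \<notin> Sstar \<Longrightarrow> set d \<subseteq> F0 \<Longrightarrow> \<forall>e\<in>set d. src e \<notin> Sstar"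
proof (induction d arbitrary: u)
  case Nil
  then show ?case by simp
next
  case (Cons a d)
  then have "src a = u" "a \<in> F0" by auto
  then have "dst a \<notin> Sstar" using S_bwd Cons.prems(2) by auto
  then show ?case using Cons by auto
qed

lemma Zc_path: assumes "p \<in> P" "z \<in> Zc" "z \<in> set p" "z' \<in> Zc" "z' \<in> set p" shows "z = z'"
proof (rule ccontr)
  assume ne: "z \<noteq> z'"
  have pp: "ew s p t" "set p \<subseteq> F0" using P_props[OF assms(1)] assms(1) unfolding F0_def by auto
  have gen: "\<And>x y. x \<in> Zc \<Longrightarrow> y \<in> Zc \<Longrightarrow> ple p x y \<Longrightarrow> x \<noteq> y \<Longrightarrow> False"
  proof -
    fix x y assume xy: "x \<in> Zc" "y \<in> Zc" "ple p x y" "x \<noteq> y"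
    obtain c d1 d2 where p: "p = c @ x # d1 @ y # d2" using ple_split[OF xy(3) xy(4)] by blast
    then have "gw src dst (\<lambda>e. e \<in> E) (dst x) (d1 @ y # d2) t" using pp(1) by (auto simp: gw_append)
    moreover have "dst x \<notin> Sstar" using xy unfolding Zc_def by auto
    moreover have "set (d1 @ y # d2) \<subseteq> F0" using pp(2) p by auto
    ultimately have "\<forall>e\<in>set (d1 @ y # d2). src e \<notin> Sstar" by (rule stay_out)
    then have "src y \<notin> Sstar" by simp
    then show False using xy unfolding Zc_def by auto
  qed
  have "ple p z z' \<or> ple p z' z" using ple_total[OF assms(3) assms(5)] .
  then show False using gen[OF assms(2) assms(4)] gen[OF assms(4) assms(2)] ne by auto
qed

lemma card_Zc: "card Zc \<le> m"
proof -
  have "Zc = (\<Union>p\<in>P. Zc \<inter> set p)" using Zc_F0 unfolding F0_def by auto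
  then have "card Zc \<le> (\<Sum>p\<in>P. card (Zc \<inter> set p))" using card_UN_le[OF finP] by metis
  also have "\<dots> \<le> (\<Sum>p\<in>P. 1)"
  proof (rule sum_mono)
    fix p assume "p \<in> P"
    then show "card (Zc \<inter> set p) \<le> 1" using Zc_path card_le_Suc0_iff_eq[of "Zc \<inter> set p"] by auto
  qed
  finally show ?thesis by simp
qed

lemma Zc_L: "Zc \<in> L"
  unfolding min_cuts_def using Zc_cut card_Zc cut_ge le_trans by blast

lemma L_cut: "X \<in> L \<Longrightarrow> is_cut E src dst s t X" unfolding min_cuts_def by auto

lemma L_card: "X \<in> L \<Longrightarrow> card X = m"
proof -
  assume a: "X \<in> L"
  then have "card X \<le> card Zc" using Zc_cut unfolding min_cuts_def by blast
  moreover have "m \<le> card X" using a cut_ge unfolding min_cuts_def by blast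
  ultimately show ?thesis using card_Zc by linarith
qed

lemma L_fin: "X \<in> L \<Longrightarrow> finite X" using L_cut finE finite_subset unfolding is_cut_def by blast

lemma L_struct: assumes "X \<in> L" shows "X \<subseteq> F0" "\<And>p. p \<in> P \<Longrightarrow> card (X \<inter> set p) = 1"
proof -
  have fX: "finite X" using L_fin assms by auto
  have ge1: "\<forall>p\<in>P. 1 \<le> card (X \<inter> set p)"
  proof
    fix p assume "p \<in> P"
    then have "X \<inter> set p \<noteq> {}" using assms L_cut P_path unfolding is_cut_def by blast
    then show "1 \<le> card (X \<inter> set p)" using fX by (simp add: Suc_leI card_gt_0_iff)
  qed
  have eq: "(\<Sum>p\<in>P. card (X \<inter> set p)) = card (X \<inter> F0)"
    unfolding F0_def by (subst card_UN_disjoint[symmetric]) (use finP fX P_disj in auto)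
  have le: "card (X \<inter> F0) \<le> card X" using fX by (intro card_mono) auto
  have "m \<le> (\<Sum>p\<in>P. card (X \<inter> set p))" using sum_mono[of P "\<lambda>_. 1::nat"] ge1 by auto
  then have sums: "(\<Sum>p\<in>P. card (X \<inter> set p)) = m" using eq le L_card[OF assms] by auto
  then have "card (X \<inter> F0) = card X" using eq le L_card[OF assms] by auto
  then have "X \<inter> F0 = X" using card_subset_eq[OF fX] by blast
  then show "X \<subseteq> F0" by blast
  fix p assume pP: "p \<in> P"
  show "card (X \<inter> set p) = 1"
  proof (rule ccontr)
    assume "card (X \<inter> set p) \<noteq> 1"
    then have "1 < card (X \<inter> set p)" using ge1 pP by fastforce
    then have "(\<Sum>p\<in>P. (1::nat)) < (\<Sum>p\<in>P. card (X \<inter> set p))"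
      using sum_strict_mono_ex1[OF finP, of "\<lambda>_. 1" "\<lambda>p. card (X \<inter> set p)"] ge1 pP by blast
    then show False using sums by simp
  qed
qed

definition xp :: "nat set \<Rightarrow> nat list \<Rightarrow> nat" where "xp X p = (THE e. e \<in> X \<and> e \<in> set p)"

lemma xp: assumes "X \<in> L" "p \<in> P" shows "X \<inter> set p = {xp X p}"
proof -
  obtain e where e: "X \<inter> set p = {e}" using L_struct(2)[OF assms] card_1_singletonE by blast
  then have "xp X p = e" unfolding xp_def by (intro the_equality) auto
  then show ?thesis using e by simp
qed

lemma xp_in: "X \<in> L \<Longrightarrow> p \<in> P \<Longrightarrow> xp X p \<in> X \<and> xp X p \<in> set p" using xp by blast

lemma xp_uniq: "X \<in> L \<Longrightarrow> p \<in> P \<Longrightarrow> e \<in> X \<Longrightarrow> e \<in> set p \<Longrightarrow> e = xp X p" using xp by blast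

lemma F0_path: "e \<in> F0 \<Longrightarrow> \<exists>p\<in>P. e \<in> set p" unfolding F0_def by auto

lemma L_img: assumes "X \<in> L" shows "X = (\<lambda>p. xp X p) ` P"
proof
  show "X \<subseteq> (\<lambda>p. xp X p) ` P"
  proof
    fix e assume "e \<in> X"
    then obtain p where "p \<in> P" "e \<in> set p" using L_struct(1)[OF assms] F0_path by blast
    then show "e \<in> (\<lambda>p. xp X p) ` P" using xp_uniq[OF assms] \<open>e \<in> X\<close> by blast
  qed
  show "(\<lambda>p. xp X p) ` P \<subseteq> X" using xp_in[OF assms] by auto
qed

lemma L_eq: "X \<in> L \<Longrightarrow> Y \<in> L \<Longrightarrow> \<forall>p\<in>P. xp X p = xp Y p \<Longrightarrow> X = Y"
  using L_img by (metis image_cong)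

end

lemma gw_split: "gw st en ok u (a @ x # b) v \<longleftrightarrow> gw st en ok u a (st x) \<and> ok x \<and> gw st en ok (en x) b v"
  by (induction a arbitrary: u) auto

lemma first_hit: "set q \<inter> X \<noteq> {} \<Longrightarrow> \<exists>a e b. q = a @ e # b \<and> e \<in> X \<and> set a \<inter> X = {}"
proof -
  assume "set q \<inter> X \<noteq> {}"
  then have "\<exists>x\<in>set q. x \<in> X" by auto
  from split_list_first_prop[OF this] show ?thesis by fastforce
qed

lemma last_hit: "set q \<inter> X \<noteq> {} \<Longrightarrow> \<exists>a e b. q = a @ e # b \<and> e \<in> X \<and> set b \<inter> X = {}"
proof -
  assume "set q \<inter> X \<noteq> {}"
  then have "\<exists>x\<in>set q. x \<in> X" by auto
  from split_list_last_prop[OF this] show ?thesis by fastforce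
qed

lemma first_iff: "(\<exists>i<length q. q ! i \<in> X \<and> (\<forall>j<i. q ! j \<notin> Y)) \<longleftrightarrow> (\<exists>a e b. q = a @ e # b \<and> e \<in> X \<and> set a \<inter> Y = {})"
proof
  assume "\<exists>i<length q. q ! i \<in> X \<and> (\<forall>j<i. q ! j \<notin> Y)"
  then obtain i where i: "i < length q" "q ! i \<in> X" "\<forall>j<i. q ! j \<notin> Y" by blast
  have "q = take i q @ q ! i # drop (Suc i) q" using i(1) by (simp add: id_take_nth_drop)
  moreover have "set (take i q) \<inter> Y = {}"
  proof -
    have "\<And>x. x \<in> set (take i q) \<Longrightarrow> x \<notin> Y"
    proof -
      fix x assume "x \<in> set (take i q)"
      then obtain j where "j < length (take i q)" "take i q ! j = x" by (auto simp: in_set_conv_nth)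
      then show "x \<notin> Y" using i by auto
    qed
    then show ?thesis by blast
  qed
  ultimately show "\<exists>a e b. q = a @ e # b \<and> e \<in> X \<and> set a \<inter> Y = {}" using i(2) by blast
next
  assume "\<exists>a e b. q = a @ e # b \<and> e \<in> X \<and> set a \<inter> Y = {}"
  then obtain a e b where q: "q = a @ e # b" "e \<in> X" "set a \<inter> Y = {}" by blast
  have "length a < length q" "q ! length a \<in> X" using q by auto
  moreover have "\<forall>j<length a. q ! j \<notin> Y"
  proof (intro allI impI)
    fix j assume "j < length a"
    then have "q ! j = a ! j" "a ! j \<in> set a" using q by (auto simp: nth_append)
    then show "q ! j \<notin> Y" using q(3) by auto
  qed
  ultimately show "\<exists>i<length q. q ! i \<in> X \<and> (\<forall>j<i. q ! j \<notin> Y)" by blast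
qed

lemma cut_le_iff: "cut_le E src dst s t X Y \<longleftrightarrow> (\<forall>q. is_path E src dst s t q \<longrightarrow> (\<exists>a e b. q = a @ e # b \<and> e \<in> X \<and> set a \<inter> Y = {}))"
  unfolding cut_le_def first_iff by blast

lemma distinct_single: "distinct xs \<Longrightarrow> set xs = {y} \<Longrightarrow> xs = [y]"
proof (cases xs)
  case Nil
  then show "distinct xs \<Longrightarrow> set xs = {y} \<Longrightarrow> xs = [y]" by simp
next
  case (Cons z zs)
  assume d: "distinct xs" "set xs = {y}"
  then have "z = y" "set zs \<subseteq> {y}" "y \<notin> set zs" using Cons by auto
  then have "zs = []" by (cases zs) auto
  then show "xs = [y]" using Cons \<open>z = y\<close> by simp
qed

lemma filt: assumes "distinct p" "ple p x y" "set p \<inter> A = {x, y}"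
  shows "filter (\<lambda>e. e \<in> A) p \<noteq> [] \<and> hd (filter (\<lambda>e. e \<in> A) p) = x \<and> last (filter (\<lambda>e. e \<in> A) p) = y"
proof -
  obtain c d where p: "p = c @ x # d" "y \<in> set (x # d)" using assms(2) unfolding ple_def by blast
  have "x \<notin> set c" "x \<notin> set d" using assms(1) p(1) by auto
  moreover have "y \<notin> set c" using assms(1) p by auto
  ultimately have fc: "filter (\<lambda>e. e \<in> A) c = []" using assms(3) p(1) by (auto simp: filter_empty_conv)
  have xA: "x \<in> A" using assms(3) by auto
  have fd: "filter (\<lambda>e. e \<in> A) d = (if y = x then [] else [y])"
  proof (cases "y = x")
    case True
    then show ?thesis using assms(3) p(1) \<open>x \<notin> set d\<close> by (auto simp: filter_empty_conv)
  next
    case False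
    have "filter (\<lambda>e. e \<in> A) d = [y]"
    proof (rule distinct_single)
      show "set (filter (\<lambda>e. e \<in> A) d) = {y}" using False assms(3) p \<open>x \<notin> set d\<close> by auto
      show "distinct (filter (\<lambda>e. e \<in> A) d)" using assms(1) p(1) by auto
    qed
    then show ?thesis using False by simp
  qed
  show ?thesis using fc fd xA p(1) by auto
qed

context mc begin

lemma L1: assumes Y: "Y \<in> L" and pP: "p \<in> P" and f: "f \<in> set p" "ple p (xp Y p) f" "f \<noteq> xp Y p"
  and a: "ew s a (src f)" "set a \<inter> Y = {}" shows False
proof -
  obtain x where x: "x = xp Y p" by blast
  have Yp: "Y \<inter> set p = {x}" using xp[OF Y pP] x by simp
  have ne: "x \<noteq> f" using f(3) x by auto
  have f2: "ple p x f" using f(2) x by simp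
  obtain c d1 d2 where p: "p = c @ x # d1 @ f # d2" using ple_split[OF f2 ne] by blast
  have pp: "ew s p t" "distinct p" "set p \<subseteq> E" using P_props[OF pP] by auto
  have "ew s ((c @ x # d1) @ f # d2) t" using pp(1) p by simp
  then have d2: "ew (dst f) d2 t" by (simp only: gw_split)
  have "x \<notin> set d2" using pp(2) p by simp
  then have "set d2 \<inter> Y = {}" using Yp p by auto
  moreover have "f \<notin> Y" using Yp f ne by auto
  moreover have "ew s (a @ f # d2) t" using a(1) d2 pp(3) f(1) by (auto simp: gw_split)
  then have "set (a @ f # d2) \<inter> Y \<noteq> {}" by (rule walk_hits[OF L_cut[OF Y]])
  ultimately show False using a(2) by auto
qed

lemma H1: assumes Y: "Y \<in> L" and pP: "p \<in> P" and e: "e \<in> set p" "ple p e (xp Y p)" "e \<noteq> xp Y p"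
  and b: "ew (dst e) b t" "set b \<inter> Y = {}" shows False
proof -
  obtain x where x: "x = xp Y p" by blast
  have Yp: "Y \<inter> set p = {x}" using xp[OF Y pP] x by simp
  have ne: "e \<noteq> x" using e(3) x by auto
  have e2: "ple p e x" using e(2) x by simp
  obtain c d1 d2 where p: "p = c @ e # d1 @ x # d2" using ple_split[OF e2 ne] by blast
  have pp: "ew s p t" "distinct p" "set p \<subseteq> E" using P_props[OF pP] by auto
  have "ew s (c @ e # (d1 @ x # d2)) t" using pp(1) p by simp
  then have c: "ew s c (src e)" by (simp only: gw_split)
  have "x \<notin> set c" using pp(2) p by simp
  then have "set c \<inter> Y = {}" using Yp p by auto
  moreover have "e \<notin> Y" using Yp e ne by auto
  moreover have "ew s (c @ e # b) t" using c b(1) pp(3) e(1) by (auto simp: gw_split)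
  then have "set (c @ e # b) \<inter> Y \<noteq> {}" by (rule walk_hits[OF L_cut[OF Y]])
  ultimately show False using b(2) by auto
qed

lemma K: assumes X: "X \<in> L" and Y: "Y \<in> L"
  shows "cut_le E src dst s t X Y \<longleftrightarrow> (\<forall>p\<in>P. ple p (xp X p) (xp Y p))"
proof
  assume le: "cut_le E src dst s t X Y"
  show "\<forall>p\<in>P. ple p (xp X p) (xp Y p)"
  proof
    fix p assume pP: "p \<in> P"
    have "\<forall>q. is_path E src dst s t q \<longrightarrow> (\<exists>a e b. q = a @ e # b \<and> e \<in> X \<and> set a \<inter> Y = {})"
      using le unfolding cut_le_iff .
    from this[rule_format, OF P_path[OF pP]]
    obtain a e b where q: "p = a @ e # b" "e \<in> X" "set a \<inter> Y = {}" by blast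
    have ep: "e \<in> set p" using q(1) by simp
    have ex: "e = xp X p" using xp_uniq[OF X pP q(2) ep] .
    have yp: "xp Y p \<in> set p" "xp Y p \<in> Y" using xp_in[OF Y pP] by auto
    have "set p = set a \<union> set (e # b)" using q(1) by simp
    then have "xp Y p \<in> set (e # b)" using yp q(3) by blast
    then have "ple p e (xp Y p)" unfolding ple_def using q(1) by (intro exI[of _ a] exI[of _ b]) simp
    then show "ple p (xp X p) (xp Y p)" using ex by simp
  qed
next
  assume H: "\<forall>p\<in>P. ple p (xp X p) (xp Y p)"
  show "cut_le E src dst s t X Y"
    unfolding cut_le_iff
  proof (intro allI impI)
    fix q assume qp: "is_path E src dst s t q"
    then have "set q \<inter> X \<noteq> {}" using L_cut[OF X] unfolding is_cut_def by auto
    from first_hit[OF this] obtain a e b where q: "q = a @ e # b" "e \<in> X" "set a \<inter> X = {}" by blast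
    have "set a \<inter> Y = {}"
    proof (rule ccontr)
      assume "set a \<inter> Y \<noteq> {}"
      then obtain f where f: "f \<in> set a" "f \<in> Y" by blast
      then obtain a1 a2 where a: "a = a1 @ f # a2" by (meson split_list)
      have "f \<in> F0" using L_struct(1)[OF Y] f(2) by blast
      from F0_path[OF this] obtain p where pP: "p \<in> P" "f \<in> set p" by blast
      have fx: "f = xp Y p" using xp_uniq[OF Y pP(1) f(2) pP(2)] .
      have "f \<noteq> xp X p" using f q(3) xp_in[OF X pP(1)] by auto
      moreover have "ew s (a1 @ f # (a2 @ e # b)) t" using qp q a unfolding is_path_iff by simp
      then have "ew s a1 (src f)" by (simp only: gw_split)
      moreover have "set a1 \<inter> X = {}" using q(3) a by auto
      moreover have "ple p (xp X p) f" using H pP(1) fx by auto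
      ultimately show False using L1[OF X pP(1) pP(2)] by blast
    qed
    then show "\<exists>a e b. q = a @ e # b \<and> e \<in> X \<and> set a \<inter> Y = {}" using q by blast
  qed
qed

lemma le_refl: "X \<in> L \<Longrightarrow> cut_le E src dst s t X X"
proof -
  assume a: "X \<in> L"
  have "\<forall>p\<in>P. ple p (xp X p) (xp X p)"
  proof
    fix p assume "p \<in> P"
    then have "xp X p \<in> set p" using xp_in[OF a] by blast
    then show "ple p (xp X p) (xp X p)" by (rule ple_refl)
  qed
  then show ?thesis using K[OF a a] by blast
qed

lemma le_trans: "X \<in> L \<Longrightarrow> Y \<in> L \<Longrightarrow> Z \<in> L \<Longrightarrow> cut_le E src dst s t X Y \<Longrightarrow> cut_le E src dst s t Y Z \<Longrightarrow> cut_le E src dst s t X Z"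
proof -
  assume a: "X \<in> L" "Y \<in> L" "Z \<in> L" "cut_le E src dst s t X Y" "cut_le E src dst s t Y Z"
  have h1: "\<forall>p\<in>P. ple p (xp X p) (xp Y p)" using K[OF a(1) a(2)] a(4) by blast
  have h2: "\<forall>p\<in>P. ple p (xp Y p) (xp Z p)" using K[OF a(2) a(3)] a(5) by blast
  have "\<forall>p\<in>P. ple p (xp X p) (xp Z p)"
  proof
    fix p assume pP: "p \<in> P"
    have d: "distinct p" using P_props[OF pP] by blast
    show "ple p (xp X p) (xp Z p)" using ple_trans[OF d] h1 h2 pP by blast
  qed
  then show ?thesis using K[OF a(1) a(3)] by blast
qed

lemma le_antisym: "X \<in> L \<Longrightarrow> Y \<in> L \<Longrightarrow> cut_le E src dst s t X Y \<Longrightarrow> cut_le E src dst s t Y X \<Longrightarrow> X = Y"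
proof -
  assume a: "X \<in> L" "Y \<in> L" "cut_le E src dst s t X Y" "cut_le E src dst s t Y X"
  have h1: "\<forall>p\<in>P. ple p (xp X p) (xp Y p)" using K[OF a(1) a(2)] a(3) by blast
  have h2: "\<forall>p\<in>P. ple p (xp Y p) (xp X p)" using K[OF a(2) a(1)] a(4) by blast
  have "\<forall>p\<in>P. xp X p = xp Y p"
  proof
    fix p assume pP: "p \<in> P"
    have d: "distinct p" using P_props[OF pP] by blast
    show "xp X p = xp Y p" using ple_antisym[OF d] h1 h2 pP by blast
  qed
  then show ?thesis using L_eq[OF a(1) a(2)] by blast
qed

end

definition later :: "nat list \<Rightarrow> nat \<Rightarrow> nat \<Rightarrow> nat" where "later p x y = (if ple p x y then y else x)"
definition earlier :: "nat list \<Rightarrow> nat \<Rightarrow> nat \<Rightarrow> nat" where "earlier p x y = (if ple p x y then x else y)"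

lemma later_in: "later p x y \<in> {x, y}" unfolding later_def by auto
lemma earlier_in: "earlier p x y \<in> {x, y}" unfolding earlier_def by auto

lemma later_ge1: "x \<in> set p \<Longrightarrow> ple p x (later p x y)"
  unfolding later_def using ple_refl by auto
lemma later_ge2: "x \<in> set p \<Longrightarrow> y \<in> set p \<Longrightarrow> ple p y (later p x y)"
proof -
  assume a: "x \<in> set p" "y \<in> set p"
  show ?thesis
  proof (cases "ple p x y")
    case True then show ?thesis unfolding later_def using ple_refl[OF a(2)] by simp
  next
    case False then show ?thesis unfolding later_def using ple_total[OF a] by simp
  qed
qed
lemma earlier_le1: "x \<in> set p \<Longrightarrow> y \<in> set p \<Longrightarrow> ple p (earlier p x y) x"
proof -
  assume a: "x \<in> set p" "y \<in> set p"
  show ?thesis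
  proof (cases "ple p x y")
    case True then show ?thesis unfolding earlier_def using ple_refl[OF a(1)] by simp
  next
    case False then show ?thesis unfolding earlier_def using ple_total[OF a] by simp
  qed
qed
lemma earlier_le2: "y \<in> set p \<Longrightarrow> ple p (earlier p x y) y"
  unfolding earlier_def using ple_refl by auto

context mc begin

lemma XY_p: assumes X: "X \<in> L" and Y: "Y \<in> L" and pP: "p \<in> P"
  shows "set p \<inter> (X \<union> Y) = {xp X p, xp Y p}"
  using xp[OF X pP] xp[OF Y pP] by auto

lemma lastf: assumes X: "X \<in> L" and Y: "Y \<in> L" and pP: "p \<in> P"
  shows "last (filter (\<lambda>e. e \<in> X \<union> Y) p) = later p (xp X p) (xp Y p) \<and>
         hd (filter (\<lambda>e. e \<in> X \<union> Y) p) = earlier p (xp X p) (xp Y p)"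
proof -
  obtain x y where xy: "x = xp X p" "y = xp Y p" by blast
  have d: "distinct p" using P_props[OF pP] by blast
  have sp: "set p \<inter> (X \<union> Y) = {x, y}" using XY_p[OF X Y pP] xy by simp
  have inp: "x \<in> set p" "y \<in> set p" using sp by auto
  show ?thesis
  proof (cases "ple p x y")
    case True
    then show ?thesis using filt[OF d True sp] xy unfolding later_def earlier_def by simp
  next
    case False
    then have h: "ple p y x" using ple_total[OF inp] by blast
    have sp2: "set p \<inter> (X \<union> Y) = {y, x}" using sp by auto
    show ?thesis using filt[OF d h sp2] xy False unfolding later_def earlier_def by simp
  qed
qed

lemma img_L: assumes g: "\<forall>p\<in>P. g p \<in> set p" and c: "is_cut E src dst s t (g ` P)"
  shows "g ` P \<in> L" "\<forall>p\<in>P. xp (g ` P) p = g p"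
proof -
  have "card (g ` P) \<le> m" using card_image_le[OF finP] by blast
  then have "\<forall>Y. is_cut E src dst s t Y \<longrightarrow> card (g ` P) \<le> card Y"
  proof (intro allI impI)
    fix Y assume "card (g ` P) \<le> m" "is_cut E src dst s t Y"
    then show "card (g ` P) \<le> card Y" using cut_ge[of Y] by linarith
  qed
  then show gL: "g ` P \<in> L" unfolding min_cuts_def using c by blast
  show "\<forall>p\<in>P. xp (g ` P) p = g p"
  proof
    fix p assume pP: "p \<in> P"
    have "g p \<in> g ` P" "g p \<in> set p" using pP g by auto
    then show "xp (g ` P) p = g p" using xp_uniq[OF gL pP] by simp
  qed
qed

lemma join_img: assumes X: "X \<in> L" and Y: "Y \<in> L"
  shows "cut_join P X Y = (\<lambda>p. later p (xp X p) (xp Y p)) ` P"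
  unfolding cut_join_def S_max_def using lastf[OF X Y] by (intro image_cong) auto

lemma meet_img: assumes X: "X \<in> L" and Y: "Y \<in> L"
  shows "cut_meet P X Y = (\<lambda>p. earlier p (xp X p) (xp Y p)) ` P"
  unfolding cut_meet_def S_min_def using lastf[OF X Y] by (intro image_cong) auto

lemma later_set: "X \<in> L \<Longrightarrow> Y \<in> L \<Longrightarrow> p \<in> P \<Longrightarrow> later p (xp X p) (xp Y p) \<in> set p"
proof -
  assume a: "X \<in> L" "Y \<in> L" "p \<in> P"
  have "xp X p \<in> set p" "xp Y p \<in> set p" using xp_in[OF a(1) a(3)] xp_in[OF a(2) a(3)] by auto
  then show ?thesis using later_in[of p "xp X p" "xp Y p"] by auto
qed

lemma earlier_set: "X \<in> L \<Longrightarrow> Y \<in> L \<Longrightarrow> p \<in> P \<Longrightarrow> earlier p (xp X p) (xp Y p) \<in> set p"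
proof -
  assume a: "X \<in> L" "Y \<in> L" "p \<in> P"
  have "xp X p \<in> set p" "xp Y p \<in> set p" using xp_in[OF a(1) a(3)] xp_in[OF a(2) a(3)] by auto
  then show ?thesis using earlier_in[of p "xp X p" "xp Y p"] by auto
qed

lemma path_walk: "is_path E src dst s t q \<Longrightarrow> ew s q t" using is_path_iff by blast

lemma join_cut: assumes X: "X \<in> L" and Y: "Y \<in> L"
  shows "is_cut E src dst s t ((\<lambda>p. later p (xp X p) (xp Y p)) ` P)" (is "is_cut _ _ _ _ _ ?W")
  unfolding is_cut_def
proof (intro conjI allI impI)
  show "?W \<subseteq> E" using later_set[OF X Y] P_props by blast
  fix q assume qp: "is_path E src dst s t q"
  show "set q \<inter> ?W \<noteq> {}"
  proof
    assume nW: "set q \<inter> ?W = {}"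
    have "set q \<inter> X \<noteq> {}" using L_cut[OF X] qp unfolding is_cut_def by blast
    then have "set q \<inter> (X \<union> Y) \<noteq> {}" by blast
    from last_hit[OF this] obtain a e b where q: "q = a @ e # b" "e \<in> X \<union> Y" "set b \<inter> (X \<union> Y) = {}" by blast
    have "ew s (a @ e # b) t" using path_walk[OF qp] q(1) by simp
    then have bw: "ew (dst e) b t" by (simp only: gw_split)
    have "e \<in> F0" using q(2) L_struct(1)[OF X] L_struct(1)[OF Y] by blast
    from F0_path[OF this] obtain p where pP: "p \<in> P" "e \<in> set p" by blast
    have eW: "e \<noteq> later p (xp X p) (xp Y p)" using nW q(1) pP(1) by auto
    have inp: "xp X p \<in> set p" "xp Y p \<in> set p" using xp_in[OF X pP(1)] xp_in[OF Y pP(1)] by auto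
    show False
    proof (cases "e \<in> X")
      case True
      then have ex: "e = xp X p" using xp_uniq[OF X pP(1) _ pP(2)] by blast
      then have h: "ple p e (xp Y p)" "e \<noteq> xp Y p" using eW unfolding later_def by (auto split: if_splits)
      have "set b \<inter> Y = {}" using q(3) by blast
      then show False using H1[OF Y pP(1) pP(2) h bw] by blast
    next
      case False
      then have "e \<in> Y" using q(2) by blast
      then have ey: "e = xp Y p" using xp_uniq[OF Y pP(1) _ pP(2)] by blast
      then have "\<not> ple p (xp X p) e" "e \<noteq> xp X p" using eW unfolding later_def by (auto split: if_splits)
      then have h: "ple p e (xp X p)" "e \<noteq> xp X p" using ple_total[OF pP(2) inp(1)] by auto
      have "set b \<inter> X = {}" using q(3) by blast
      then show False using H1[OF X pP(1) pP(2) h bw] by blast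
    qed
  qed
qed

lemma meet_cut: assumes X: "X \<in> L" and Y: "Y \<in> L"
  shows "is_cut E src dst s t ((\<lambda>p. earlier p (xp X p) (xp Y p)) ` P)" (is "is_cut _ _ _ _ _ ?W")
  unfolding is_cut_def
proof (intro conjI allI impI)
  show "?W \<subseteq> E" using earlier_set[OF X Y] P_props by blast
  fix q assume qp: "is_path E src dst s t q"
  show "set q \<inter> ?W \<noteq> {}"
  proof
    assume nW: "set q \<inter> ?W = {}"
    have "set q \<inter> X \<noteq> {}" using L_cut[OF X] qp unfolding is_cut_def by blast
    then have "set q \<inter> (X \<union> Y) \<noteq> {}" by blast
    from first_hit[OF this] obtain a e b where q: "q = a @ e # b" "e \<in> X \<union> Y" "set a \<inter> (X \<union> Y) = {}" by blast
    have "ew s (a @ e # b) t" using path_walk[OF qp] q(1) by simp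
    then have aw: "ew s a (src e)" by (simp only: gw_split)
    have "e \<in> F0" using q(2) L_struct(1)[OF X] L_struct(1)[OF Y] by blast
    from F0_path[OF this] obtain p where pP: "p \<in> P" "e \<in> set p" by blast
    have eW: "e \<noteq> earlier p (xp X p) (xp Y p)" using nW q(1) pP(1) by auto
    have inp: "xp X p \<in> set p" "xp Y p \<in> set p" using xp_in[OF X pP(1)] xp_in[OF Y pP(1)] by auto
    show False
    proof (cases "e \<in> X")
      case True
      then have ex: "e = xp X p" using xp_uniq[OF X pP(1) _ pP(2)] by blast
      then have "\<not> ple p e (xp Y p)" "e \<noteq> xp Y p" using eW unfolding earlier_def by (auto split: if_splits)
      then have h: "ple p (xp Y p) e" "e \<noteq> xp Y p" using ple_total[OF pP(2) inp(2)] by auto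
      have "set a \<inter> Y = {}" using q(3) by blast
      then show False using L1[OF Y pP(1) pP(2) h aw] by blast
    next
      case False
      then have "e \<in> Y" using q(2) by blast
      then have ey: "e = xp Y p" using xp_uniq[OF Y pP(1) _ pP(2)] by blast
      then have h: "ple p (xp X p) e" "e \<noteq> xp X p" using eW unfolding earlier_def by (auto split: if_splits)
      have "set a \<inter> X = {}" using q(3) by blast
      then show False using L1[OF X pP(1) pP(2) h aw] by blast
    qed
  qed
qed

lemma join_L: assumes X: "X \<in> L" and Y: "Y \<in> L"
  shows "cut_join P X Y \<in> L" "\<forall>p\<in>P. xp (cut_join P X Y) p = later p (xp X p) (xp Y p)"
  using img_L[OF _ join_cut[OF X Y]] later_set[OF X Y] join_img[OF X Y] by auto

lemma meet_L: assumes X: "X \<in> L" and Y: "Y \<in> L"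
  shows "cut_meet P X Y \<in> L" "\<forall>p\<in>P. xp (cut_meet P X Y) p = earlier p (xp X p) (xp Y p)"
  using img_L[OF _ meet_cut[OF X Y]] earlier_set[OF X Y] meet_img[OF X Y] by auto

lemma join_comm: "cut_join P X Y = cut_join P Y X" unfolding cut_join_def by (simp add: Un_commute)

lemma join_eq: assumes X: "X \<in> L" and Y: "Y \<in> L" and le: "cut_le E src dst s t X Y"
  shows "cut_join P X Y = Y"
proof (rule L_eq[OF join_L(1)[OF X Y] Y])
  have h: "\<forall>p\<in>P. ple p (xp X p) (xp Y p)" using K[OF X Y] le by blast
  show "\<forall>p\<in>P. xp (cut_join P X Y) p = xp Y p"
    using join_L(2)[OF X Y] h unfolding later_def by auto
qed

lemma join_ub1: assumes X: "X \<in> L" and Y: "Y \<in> L" shows "cut_le E src dst s t X (cut_join P X Y)"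
proof -
  have "\<forall>p\<in>P. ple p (xp X p) (xp (cut_join P X Y) p)"
  proof
    fix p assume pP: "p \<in> P"
    have "ple p (xp X p) (later p (xp X p) (xp Y p))" using later_ge1 xp_in[OF X pP] by blast
    then show "ple p (xp X p) (xp (cut_join P X Y) p)" using join_L(2)[OF X Y] pP by simp
  qed
  then show ?thesis using K[OF X join_L(1)[OF X Y]] by blast
qed

lemma join_ub2: assumes X: "X \<in> L" and Y: "Y \<in> L" shows "cut_le E src dst s t Y (cut_join P X Y)"
  using join_ub1[OF Y X] join_comm by simp

lemma join_least: assumes X: "X \<in> L" and Y: "Y \<in> L" and Z: "Z \<in> L"
  and a: "cut_le E src dst s t X Z" "cut_le E src dst s t Y Z"
  shows "cut_le E src dst s t (cut_join P X Y) Z"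
proof -
  have h1: "\<forall>p\<in>P. ple p (xp X p) (xp Z p)" using K[OF X Z] a(1) by blast
  have h2: "\<forall>p\<in>P. ple p (xp Y p) (xp Z p)" using K[OF Y Z] a(2) by blast
  have "\<forall>p\<in>P. ple p (xp (cut_join P X Y) p) (xp Z p)"
  proof
    fix p assume pP: "p \<in> P"
    have "ple p (later p (xp X p) (xp Y p)) (xp Z p)" using h1 h2 pP unfolding later_def by auto
    then show "ple p (xp (cut_join P X Y) p) (xp Z p)" using join_L(2)[OF X Y] pP by simp
  qed
  then show ?thesis using K[OF join_L(1)[OF X Y] Z] by blast
qed

lemma meet_lb1: assumes X: "X \<in> L" and Y: "Y \<in> L" shows "cut_le E src dst s t (cut_meet P X Y) X"
proof -
  have "\<forall>p\<in>P. ple p (xp (cut_meet P X Y) p) (xp X p)"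
  proof
    fix p assume pP: "p \<in> P"
    have "ple p (earlier p (xp X p) (xp Y p)) (xp X p)" using earlier_le1 xp_in[OF X pP] xp_in[OF Y pP] by blast
    then show "ple p (xp (cut_meet P X Y) p) (xp X p)" using meet_L(2)[OF X Y] pP by simp
  qed
  then show ?thesis using K[OF meet_L(1)[OF X Y] X] by blast
qed

lemma meet_lb2: assumes X: "X \<in> L" and Y: "Y \<in> L" shows "cut_le E src dst s t (cut_meet P X Y) Y"
proof -
  have "\<forall>p\<in>P. ple p (xp (cut_meet P X Y) p) (xp Y p)"
  proof
    fix p assume pP: "p \<in> P"
    have "ple p (earlier p (xp X p) (xp Y p)) (xp Y p)" using earlier_le2 xp_in[OF Y pP] by blast
    then show "ple p (xp (cut_meet P X Y) p) (xp Y p)" using meet_L(2)[OF X Y] pP by simp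
  qed
  then show ?thesis using K[OF meet_L(1)[OF X Y] Y] by blast
qed

lemma SR: assumes X: "X \<in> L" and v: "v \<in> Sstar" shows "\<exists>w. ew s w v \<and> set w \<inter> X = {}"
proof -
  have "(s, v) \<in> {(rst a, ren a) | a. rok a}\<^sup>*" using v unfolding Sstar_def by simp
  then show ?thesis
  proof (induction rule: rtrancl_induct)
    case base
    then show ?case by (intro exI[of _ "[]"]) simp
  next
    case (step y z)
    then obtain w where w: "ew s w y" "set w \<inter> X = {}" by blast
    from step(2) obtain a where a: "rok a" "y = rst a" "z = ren a" by blast
    obtain e b where ab: "a = (e, b)" by (cases a) auto
    show ?case
    proof (cases b)
      case True
      then have e: "e \<in> E" "e \<notin> F0" "src e = y" "dst e = z" using a ab unfolding rok_def rst_def ren_def by auto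
      then have "e \<notin> X" using L_struct(1)[OF X] by blast
      moreover have "ew s (w @ [e]) z" using w(1) e by (simp add: gw_append)
      ultimately show ?thesis using w(2) by (intro exI[of _ "w @ [e]"]) auto
    next
      case False
      then have e: "e \<in> F0" "dst e = y" "src e = z" using a ab unfolding rok_def rst_def ren_def by auto
      from F0_path[OF e(1)] obtain p where pP: "p \<in> P" "e \<in> set p" by blast
      obtain x where x: "x = xp X p" by blast
      have Xp: "X \<inter> set p = {x}" using xp[OF X pP(1)] x by simp
      have d: "distinct p" and pw: "ew s p t" using P_props[OF pP(1)] by auto
      have xin: "x \<in> set p" using Xp by auto
      show ?thesis
      proof (cases "ple p e x \<and> e \<noteq> x")
        case True
        then have "ple p e x" "e \<noteq> x" by auto
        from ple_split[OF this] obtain c d1 d2 where p: "p = c @ e # d1 @ x # d2" by blast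
        have "ew s (c @ e # (d1 @ x # d2)) t" using pw p by simp
        then have cw: "ew s c (src e)" by (simp only: gw_split)
        have "x \<notin> set c" using d p by simp
        then have "set c \<inter> X = {}" using Xp p by auto
        then show ?thesis using cw e(3) by blast
      next
        case False
        then have h: "ple p x e" using ple_total[OF pP(2) xin] ple_refl[OF xin] by auto
        obtain c dd where p: "p = c @ e # dd" using pP(2) by (meson split_list)
        have "ew s (c @ e # dd) t" using pw p by simp
        then have dw: "ew (dst e) dd t" by (simp only: gw_split)
        have "x \<notin> set dd"
        proof
          assume "x \<in> set dd"
          then have "ple p e x" unfolding ple_def using p by auto
          then have "x = e" using ple_antisym[OF d h] by simp
          then show False using \<open>x \<in> set dd\<close> d p by simp
        qed
        then have dX: "set dd \<inter> X = {}" using Xp p by auto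
        have "ew s (w @ dd) t" using w(1) dw e(2) by (auto simp: gw_append)
        then have "set (w @ dd) \<inter> X \<noteq> {}" by (rule walk_hits[OF L_cut[OF X]])
        then show ?thesis using w(2) dX by auto
      qed
    qed
  qed
qed

lemma zero_le: assumes X: "X \<in> L" shows "cut_le E src dst s t Zc X"
proof -
  have "\<forall>p\<in>P. ple p (xp Zc p) (xp X p)"
  proof
    fix p assume pP: "p \<in> P"
    obtain z x where zx: "z = xp Zc p" "x = xp X p" by blast
    have zin: "z \<in> set p" "z \<in> Zc" using xp_in[OF Zc_L pP] zx by auto
    have xin: "x \<in> set p" "x \<in> X" using xp_in[OF X pP] zx by auto
    have "ple p z x"
    proof (rule ccontr)
      assume n: "\<not> ple p z x"
      then have h: "ple p x z" "z \<noteq> x" using ple_total[OF zin(1) xin(1)] ple_refl[OF xin(1)] by auto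
      have "src z \<in> Sstar" using zin(2) unfolding Zc_def by auto
      from SR[OF X this] obtain w where w: "ew s w (src z)" "set w \<inter> X = {}" by blast
      have h1: "ple p (xp X p) z" "z \<noteq> xp X p" using h zx by auto
      show False using L1[OF X pP zin(1) h1 w] .
    qed
    then show "ple p (xp Zc p) (xp X p)" using zx by simp
  qed
  then show ?thesis using K[OF Zc_L X] by blast
qed

lemma zero_L_eq: "zero_L E src dst s t = Zc"
  unfolding zero_L_def
proof (rule the_equality)
  show "Zc \<in> L \<and> (\<forall>Y\<in>L. cut_le E src dst s t Zc Y)" using Zc_L zero_le by blast
  fix X assume a: "X \<in> L \<and> (\<forall>Y\<in>L. cut_le E src dst s t X Y)"
  then have "cut_le E src dst s t X Zc" using Zc_L by blast
  then show "X = Zc" using le_antisym[OF _ Zc_L] zero_le a by blast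
qed

end

definition tup :: "nat \<Rightarrow> 'a \<Rightarrow> 'a \<Rightarrow> nat \<Rightarrow> 'a list" where
  "tup i0 a b k = map (\<lambda>j. if j < i0 then a else b) [0..<k]"

lemma tup_len[simp]: "length (tup i0 a b k) = k" unfolding tup_def by simp
lemma tup_nth[simp]: "j < k \<Longrightarrow> tup i0 a b k ! j = (if j < i0 then a else b)" unfolding tup_def by simp

lemma rep_tup: assumes "1 \<le> i" "i \<le> k" shows "replicate (i - 1) a @ replicate (k - i + 1) b = tup (i - 1) a b k"
proof (rule nth_equalityI)
  show "length (replicate (i - 1) a @ replicate (k - i + 1) b) = length (tup (i - 1) a b k)" using assms by simp
  fix j assume "j < length (replicate (i - 1) a @ replicate (k - i + 1) b)"
  then have j: "j < k" using assms by simp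
  show "(replicate (i - 1) a @ replicate (k - i + 1) b) ! j = tup (i - 1) a b k ! j"
    using j assms by (simp add: nth_append del: replicate_Suc)
qed

lemma map2_nth: "length y = k \<Longrightarrow> length z = k \<Longrightarrow> j < k \<Longrightarrow> map2 f y z ! j = f (y ! j) (z ! j)"
  by simp

context mc begin

abbreviation "cle \<equiv> cut_le E src dst s t"

lemma U_def2: "xs \<in> U_lr E src dst s t k \<longleftrightarrow> length xs = k \<and> set xs \<subseteq> L \<and> (\<forall>i j. i < j \<and> j < k \<longrightarrow> cle (xs ! i) (xs ! j))"
  unfolding U_lr_def by simp

lemma U_nth: "xs \<in> U_lr E src dst s t k \<Longrightarrow> j < k \<Longrightarrow> xs ! j \<in> L"
  unfolding U_def2 by auto

lemma U_mono: "xs \<in> U_lr E src dst s t k \<Longrightarrow> i \<le> j \<Longrightarrow> j < k \<Longrightarrow> cle (xs ! i) (xs ! j)"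
proof -
  assume a: "xs \<in> U_lr E src dst s t k" "i \<le> j" "j < k"
  show ?thesis
  proof (cases "i = j")
    case True then show ?thesis using le_refl U_nth[OF a(1) a(3)] by simp
  next
    case False then show ?thesis using a unfolding U_def2 by auto
  qed
qed

lemma U_intro: assumes "length xs = k" "\<And>j. j < k \<Longrightarrow> xs ! j \<in> L" "\<And>i j. i < j \<Longrightarrow> j < k \<Longrightarrow> cle (xs ! i) (xs ! j)"
  shows "xs \<in> U_lr E src dst s t k"
proof -
  have "set xs \<subseteq> L" using assms(1,2) by (auto simp: in_set_conv_nth)
  then show ?thesis unfolding U_def2 using assms by blast
qed

lemma tup_U: assumes "a \<in> L" "b \<in> L" "cle a b" shows "tup i0 a b k \<in> U_lr E src dst s t k"
proof (rule U_intro)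
  show "length (tup i0 a b k) = k" by simp
  show "\<And>j. j < k \<Longrightarrow> tup i0 a b k ! j \<in> L" using assms by simp
  show "\<And>i j. i < j \<Longrightarrow> j < k \<Longrightarrow> cle (tup i0 a b k ! i) (tup i0 a b k ! j)"
    using assms le_refl by auto
qed

lemma sj_len: "length y = k \<Longrightarrow> length z = k \<Longrightarrow> length (star_join P y z) = k"
  unfolding star_join_def by simp

lemma sj_nth: "length y = k \<Longrightarrow> length z = k \<Longrightarrow> j < k \<Longrightarrow> star_join P y z ! j = cut_join P (y ! j) (z ! j)"
  unfolding star_join_def by simp

lemma JL_def2: "X \<in> J_L E src dst s t P \<longleftrightarrow> X \<in> L \<and> \<not> (\<forall>y\<in>L. cle X y) \<and>
   \<not> (\<exists>y\<in>L. \<exists>z\<in>L. y \<noteq> X \<and> z \<noteq> X \<and> cut_join P y z = X)"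
  unfolding J_L_def join_irreducible_def by simp

lemma Jstar_def2: "x \<in> J_star E src dst s t P k \<longleftrightarrow> x \<in> U_lr E src dst s t k \<and> \<not> (\<forall>y\<in>U_lr E src dst s t k. star_le E src dst s t x y) \<and>
   \<not> (\<exists>y\<in>U_lr E src dst s t k. \<exists>z\<in>U_lr E src dst s t k. y \<noteq> x \<and> z \<noteq> x \<and> star_join P y z = x)"
  unfolding J_star_def join_irreducible_def by simp

lemma JL_ne_zero: "X \<in> J_L E src dst s t P \<Longrightarrow> X \<noteq> Zc"
  using JL_def2 zero_le by blast

lemma dirA: assumes pJ: "p \<in> J_L E src dst s t P" and i0: "i0 < k"
  shows "tup i0 Zc p k \<in> J_star E src dst s t P k"
proof -
  let ?x = "tup i0 Zc p k"
  let ?U = "U_lr E src dst s t k"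
  have pL: "p \<in> L" using pJ JL_def2 by blast
  have pZ: "p \<noteq> Zc" using JL_ne_zero[OF pJ] .
  have irr: "\<And>a b. a \<in> L \<Longrightarrow> b \<in> L \<Longrightarrow> cut_join P a b = p \<Longrightarrow> a = p \<or> b = p"
    using pJ unfolding JL_def2 by blast
  have xU: "?x \<in> ?U" by (rule tup_U[OF Zc_L pL zero_le[OF pL]])
  have z0U: "tup 0 Zc Zc k \<in> ?U" by (rule tup_U[OF Zc_L Zc_L le_refl[OF Zc_L]])
  have nl: "\<not> star_le E src dst s t ?x (tup 0 Zc Zc k)"
  proof
    assume "star_le E src dst s t ?x (tup 0 Zc Zc k)"
    then have "\<forall>j<k. cle (?x ! j) (tup 0 Zc Zc k ! j)" unfolding star_le_def by simp
    then have "cle (?x ! i0) (tup 0 Zc Zc k ! i0)" using i0 by blast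
    then have "cle p Zc" using i0 by simp
    then show False using le_antisym[OF pL Zc_L _ zero_le[OF pL]] pZ by blast
  qed
  have key: "\<And>y z. y \<in> ?U \<Longrightarrow> z \<in> ?U \<Longrightarrow> star_join P y z = ?x \<Longrightarrow> y ! i0 = p \<Longrightarrow> y = ?x"
  proof -
    fix y z assume yU: "y \<in> ?U" and zU: "z \<in> ?U" and j: "star_join P y z = ?x" and yp: "y ! i0 = p"
    have ly: "length y = k" and lz: "length z = k" using yU zU unfolding U_def2 by auto
    have jn: "\<And>j. j < k \<Longrightarrow> cut_join P (y ! j) (z ! j) = ?x ! j" using sj_nth[OF ly lz] j by metis
    have ub: "\<And>j. j < k \<Longrightarrow> cle (y ! j) (?x ! j)"
    proof -
      fix j assume jk: "j < k"
      have "cle (y ! j) (cut_join P (y ! j) (z ! j))" using join_ub1[OF U_nth[OF yU jk] U_nth[OF zU jk]] .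
      then show "cle (y ! j) (?x ! j)" using jn[OF jk] by simp
    qed
    show "y = ?x"
    proof (rule nth_equalityI)
      show "length y = length ?x" using ly by simp
      fix j assume "j < length y"
      then have jk: "j < k" using ly by simp
      have yjL: "y ! j \<in> L" using U_nth[OF yU jk] .
      show "y ! j = ?x ! j"
      proof (cases "j < i0")
        case True
        then have "cle (y ! j) Zc" using ub[OF jk] jk by simp
        then show ?thesis using le_antisym[OF yjL Zc_L _ zero_le[OF yjL]] True jk by simp
      next
        case False
        then have "cle (y ! j) p" using ub[OF jk] jk by simp
        moreover have "cle p (y ! j)" using U_mono[OF yU _ jk, of i0] False yp by simp
        ultimately show ?thesis using le_antisym[OF yjL pL] False jk by simp
      qed
    qed
  qed
  have "\<not> (\<exists>y\<in>?U. \<exists>z\<in>?U. y \<noteq> ?x \<and> z \<noteq> ?x \<and> star_join P y z = ?x)"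
  proof
    assume "\<exists>y\<in>?U. \<exists>z\<in>?U. y \<noteq> ?x \<and> z \<noteq> ?x \<and> star_join P y z = ?x"
    then obtain y z where yz: "y \<in> ?U" "z \<in> ?U" "y \<noteq> ?x" "z \<noteq> ?x" "star_join P y z = ?x" by blast
    have ly: "length y = k" and lz: "length z = k" using yz unfolding U_def2 by auto
    have "star_join P z y = star_join P y z"
    proof (rule nth_equalityI)
      show "length (star_join P z y) = length (star_join P y z)" using sj_len[OF ly lz] sj_len[OF lz ly] by simp
      fix j assume "j < length (star_join P z y)"
      then have jk: "j < k" using sj_len[OF lz ly] by simp
      show "star_join P z y ! j = star_join P y z ! j"
        using sj_nth[OF ly lz jk] sj_nth[OF lz ly jk] join_comm by simp
    qed
    then have "star_join P z y = ?x" using yz(5) by simp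
    then have "z ! i0 \<noteq> p" using key[OF yz(2) yz(1)] yz(4) by blast
    moreover have "y ! i0 \<noteq> p" using key[OF yz(1) yz(2) yz(5)] yz(3) by blast
    moreover have "cut_join P (y ! i0) (z ! i0) = p" using sj_nth[OF ly lz i0] yz(5) i0 by simp
    ultimately show False using irr[OF U_nth[OF yz(1) i0] U_nth[OF yz(2) i0]] by blast
  qed
  then show ?thesis unfolding Jstar_def2 using xU z0U nl by blast
qed

end

context mc begin

lemma dirB: assumes xJ: "x \<in> J_star E src dst s t P k"
  shows "\<exists>i0<k. \<exists>p. p \<in> J_L E src dst s t P \<and> x = tup i0 Zc p k"
proof -
  let ?U = "U_lr E src dst s t k"
  have xU: "x \<in> ?U" and nl: "\<not> (\<forall>y\<in>?U. star_le E src dst s t x y)"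
    and irr: "\<And>y z. y \<in> ?U \<Longrightarrow> z \<in> ?U \<Longrightarrow> y \<noteq> x \<Longrightarrow> z \<noteq> x \<Longrightarrow> star_join P y z \<noteq> x"
    using xJ unfolding Jstar_def2 by blast+
  have lx: "length x = k" using xU unfolding U_def2 by blast
  have z0U: "tup 0 Zc Zc k \<in> ?U" by (rule tup_U[OF Zc_L Zc_L le_refl[OF Zc_L]])
  have z0least: "\<forall>y\<in>?U. star_le E src dst s t (tup 0 Zc Zc k) y"
  proof
    fix y assume yU: "y \<in> ?U"
    have ly: "length y = k" using yU unfolding U_def2 by blast
    show "star_le E src dst s t (tup 0 Zc Zc k) y"
      unfolding star_le_def using ly zero_le U_nth[OF yU] by simp
  qed
  have "x \<noteq> tup 0 Zc Zc k" using nl z0least by blast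
  then have "\<exists>j<k. x ! j \<noteq> Zc"
  proof (rule contrapos_np)
    assume "\<not> (\<exists>j<k. x ! j \<noteq> Zc)"
    then show "x = tup 0 Zc Zc k" using lx by (intro nth_equalityI) auto
  qed
  define i0 where "i0 = (LEAST j. j < k \<and> x ! j \<noteq> Zc)"
  have i0: "i0 < k" "x ! i0 \<noteq> Zc" using LeastI_ex[OF \<open>\<exists>j<k. x ! j \<noteq> Zc\<close>] unfolding i0_def by auto
  have bef: "\<And>j. j < i0 \<Longrightarrow> x ! j = Zc"
  proof -
    fix j assume "j < i0"
    then have "\<not> (j < k \<and> x ! j \<noteq> Zc)" unfolding i0_def by (rule not_less_Least)
    then show "x ! j = Zc" using \<open>j < i0\<close> i0(1) by auto
  qed
  define p where "p = x ! i0"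
  have pL: "p \<in> L" unfolding p_def using U_nth[OF xU i0(1)] .
  have xnL: "\<And>j. j < k \<Longrightarrow> x ! j \<in> L" using U_nth[OF xU] .
  define y where "y = tup i0 Zc p k"
  define z where "z = map (\<lambda>j. if j \<le> i0 then Zc else x ! j) [0..<k]"
  have yU: "y \<in> ?U" unfolding y_def by (rule tup_U[OF Zc_L pL zero_le[OF pL]])
  have lz: "length z = k" unfolding z_def by simp
  have zn: "\<And>j. j < k \<Longrightarrow> z ! j = (if j \<le> i0 then Zc else x ! j)" unfolding z_def by simp
  have zU: "z \<in> ?U"
  proof (rule U_intro[OF lz])
    show "\<And>j. j < k \<Longrightarrow> z ! j \<in> L" using zn xnL Zc_L by simp
    fix a b assume ab: "a < b" "b < k"
    show "cle (z ! a) (z ! b)"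
    proof (cases "b \<le> i0")
      case True then show ?thesis using zn ab le_refl[OF Zc_L] by simp
    next
      case False
      show ?thesis
      proof (cases "a \<le> i0")
        case True then show ?thesis using zn ab False zero_le[OF xnL[OF ab(2)]] by simp
      next
        case F2: False then show ?thesis using zn ab False U_mono[OF xU, of a b] by simp
      qed
    qed
  qed
  have ly: "length y = k" unfolding y_def by simp
  have yz: "star_join P y z = x"
  proof (rule nth_equalityI)
    show "length (star_join P y z) = length x" using sj_len[OF ly lz] lx by simp
    fix j assume "j < length (star_join P y z)"
    then have jk: "j < k" using sj_len[OF ly lz] by simp
    have e: "star_join P y z ! j = cut_join P (y ! j) (z ! j)" using sj_nth[OF ly lz jk] .
    show "star_join P y z ! j = x ! j"
    proof (cases "j < i0")
      case True
      then show ?thesis using e zn[OF jk] jk join_eq[OF Zc_L Zc_L le_refl[OF Zc_L]] bef[OF True]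
        unfolding y_def by simp
    next
      case False
      show ?thesis
      proof (cases "j = i0")
        case True
        have "cut_join P p Zc = p" using join_comm join_eq[OF Zc_L pL zero_le[OF pL]] by simp
        then show ?thesis using e zn[OF jk] jk True unfolding y_def p_def by simp
      next
        case F2: False
        then have "cle p (x ! j)" unfolding p_def using U_mono[OF xU, of i0 j] jk False by simp
        then have "cut_join P p (x ! j) = x ! j" using join_eq[OF pL xnL[OF jk]] by simp
        then show ?thesis using e zn[OF jk] jk False F2 unfolding y_def by simp
      qed
    qed
  qed
  have znx: "z \<noteq> x"
  proof
    assume "z = x"
    then have "x ! i0 = Zc" using zn[OF i0(1)] by simp
    then show False using i0(2) by simp
  qed
  have yx: "y = x" using irr[OF yU zU _ znx] yz by blast
  have pJ: "p \<in> J_L E src dst s t P"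
    unfolding JL_def2
  proof (intro conjI)
    show "p \<in> L" using pL .
    show "\<not> (\<forall>y\<in>L. cle p y)"
    proof
      assume "\<forall>y\<in>L. cle p y"
      then have "cle p Zc" using Zc_L by blast
      then have "p = Zc" using le_antisym[OF pL Zc_L _ zero_le[OF pL]] by blast
      then show False using i0(2) unfolding p_def by simp
    qed
    show "\<not> (\<exists>a\<in>L. \<exists>b\<in>L. a \<noteq> p \<and> b \<noteq> p \<and> cut_join P a b = p)"
    proof
      assume "\<exists>a\<in>L. \<exists>b\<in>L. a \<noteq> p \<and> b \<noteq> p \<and> cut_join P a b = p"
      then obtain a b where ab: "a \<in> L" "b \<in> L" "a \<noteq> p" "b \<noteq> p" "cut_join P a b = p" by blast
      let ?ya = "tup i0 Zc a k" and ?yb = "tup i0 Zc b k"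
      have yaU: "?ya \<in> ?U" by (rule tup_U[OF Zc_L ab(1) zero_le[OF ab(1)]])
      have ybU: "?yb \<in> ?U" by (rule tup_U[OF Zc_L ab(2) zero_le[OF ab(2)]])
      have "star_join P ?ya ?yb = x"
      proof (rule nth_equalityI)
        show "length (star_join P ?ya ?yb) = length x" using sj_len[of ?ya k ?yb] lx by simp
        fix j assume "j < length (star_join P ?ya ?yb)"
        then have jk: "j < k" using sj_len[of ?ya k ?yb] by simp
        have "x ! j = y ! j" using yx by simp
        then show "star_join P ?ya ?yb ! j = x ! j"
          using sj_nth[of ?ya k ?yb j] jk ab(5) join_eq[OF Zc_L Zc_L le_refl[OF Zc_L]] unfolding y_def by simp
      qed
      moreover have "?ya \<noteq> x"
      proof
        assume "?ya = x"
        then have "a = p" using i0(1) unfolding p_def by auto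
        then show False using ab(3) by simp
      qed
      moreover have "?yb \<noteq> x"
      proof
        assume "?yb = x"
        then have "b = p" using i0(1) unfolding p_def by auto
        then show False using ab(4) by simp
      qed
      ultimately show False using irr[OF yaU ybU] by blast
    qed
  qed
  show ?thesis using i0(1) pJ yx unfolding y_def by blast
qed

lemma Jstar_eq: assumes k: "k \<ge> 1"
  shows "J_star E src dst s t P k = (\<Union>i\<in>{1..k}. J_i E src dst s t P k i)"
proof
  show "J_star E src dst s t P k \<subseteq> (\<Union>i\<in>{1..k}. J_i E src dst s t P k i)"
  proof
    fix x assume "x \<in> J_star E src dst s t P k"
    from dirB[OF this] obtain i0 p where ip: "i0 < k" "p \<in> J_L E src dst s t P" "x = tup i0 Zc p k" by blast
    have "x = replicate (Suc i0 - 1) (zero_L E src dst s t) @ replicate (k - Suc i0 + 1) p"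
      using rep_tup[of "Suc i0" k "zero_L E src dst s t" p] ip zero_L_eq by simp
    then have "x \<in> J_i E src dst s t P k (Suc i0)" unfolding J_i_def using ip(2) by blast
    then show "x \<in> (\<Union>i\<in>{1..k}. J_i E src dst s t P k i)" using ip(1) by force
  qed
  show "(\<Union>i\<in>{1..k}. J_i E src dst s t P k i) \<subseteq> J_star E src dst s t P k"
  proof
    fix x assume "x \<in> (\<Union>i\<in>{1..k}. J_i E src dst s t P k i)"
    then obtain i p where ip: "1 \<le> i" "i \<le> k" "p \<in> J_L E src dst s t P"
      "x = replicate (i - 1) (zero_L E src dst s t) @ replicate (k - i + 1) p" unfolding J_i_def by auto
    then have "x = tup (i - 1) Zc p k" using rep_tup[OF ip(1) ip(2)] zero_L_eq by simp
    moreover have "i - 1 < k" using ip by simp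
    ultimately show "x \<in> J_star E src dst s t P k" using dirA[OF ip(3)] by simp
  qed
qed

end

context mc begin

lemma irr_key: assumes XJ: "X \<in> J_L E src dst s t P"
  shows "\<exists>p\<in>P. \<forall>Y\<in>L. ple p (xp X p) (xp Y p) \<longrightarrow> cle X Y"
proof (rule ccontr)
  assume "\<not> (\<exists>p\<in>P. \<forall>Y\<in>L. ple p (xp X p) (xp Y p) \<longrightarrow> cle X Y)"
  then have H: "\<forall>p\<in>P. \<exists>Y\<in>L. ple p (xp X p) (xp Y p) \<and> \<not> cle X Y" by blast
  have XL: "X \<in> L" using XJ JL_def2 by blast
  have irr: "\<And>a b. a \<in> L \<Longrightarrow> b \<in> L \<Longrightarrow> a \<noteq> X \<Longrightarrow> b \<noteq> X \<Longrightarrow> cut_join P a b \<noteq> X"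
    using XJ unfolding JL_def2 by blast
  have claim: "finite Q \<Longrightarrow> Q \<subseteq> P \<Longrightarrow> \<exists>W\<in>L. cle W X \<and> W \<noteq> X \<and> (\<forall>p\<in>Q. ple p (xp X p) (xp W p))" for Q
  proof (induction rule: finite_induct)
    case empty
    have "Zc \<noteq> X" using JL_ne_zero[OF XJ] by simp
    then show ?case using Zc_L zero_le[OF XL] by blast
  next
    case (insert p Q)
    then obtain W where W: "W \<in> L" "cle W X" "W \<noteq> X" "\<forall>p\<in>Q. ple p (xp X p) (xp W p)" by blast
    have pP: "p \<in> P" using insert.prems by blast
    from H pP obtain Y where Y: "Y \<in> L" "ple p (xp X p) (xp Y p)" "\<not> cle X Y" by blast
    define Zp where "Zp = cut_meet P X Y"
    have ZpL: "Zp \<in> L" unfolding Zp_def using meet_L(1)[OF XL Y(1)] .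
    have Zpx: "xp Zp p = xp X p" unfolding Zp_def using meet_L(2)[OF XL Y(1)] pP Y(2) unfolding earlier_def by simp
    have ZpX: "cle Zp X" unfolding Zp_def using meet_lb1[OF XL Y(1)] .
    have ZpnX: "Zp \<noteq> X"
    proof
      assume "Zp = X"
      then have "cle X Y" using meet_lb2[OF XL Y(1)] unfolding Zp_def by simp
      then show False using Y(3) by simp
    qed
    define W' where "W' = cut_join P W Zp"
    have W'L: "W' \<in> L" unfolding W'_def using join_L(1)[OF W(1) ZpL] .
    have W'X: "cle W' X" unfolding W'_def using join_least[OF W(1) ZpL XL W(2) ZpX] .
    have W'nX: "W' \<noteq> X" unfolding W'_def using irr[OF W(1) ZpL W(3) ZpnX] .
    have "\<forall>p'\<in>insert p Q. ple p' (xp X p') (xp W' p')"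
    proof
      fix p' assume p'Q: "p' \<in> insert p Q"
      then have p'P: "p' \<in> P" using insert.prems by blast
      have d: "distinct p'" using P_props[OF p'P] by blast
      have inw: "xp W p' \<in> set p'" "xp Zp p' \<in> set p'" using xp_in[OF W(1) p'P] xp_in[OF ZpL p'P] by auto
      have xw: "xp W' p' = later p' (xp W p') (xp Zp p')" unfolding W'_def using join_L(2)[OF W(1) ZpL] p'P by blast
      have g1: "ple p' (xp W p') (xp W' p')" using later_ge1[OF inw(1)] xw by simp
      have g2: "ple p' (xp Zp p') (xp W' p')" using later_ge2[OF inw] xw by simp
      show "ple p' (xp X p') (xp W' p')"
      proof (cases "p' = p")
        case True then show ?thesis using g2 Zpx by simp
      next
        case False
        then have "ple p' (xp X p') (xp W p')" using W(4) p'Q by blast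
        then show ?thesis using ple_trans[OF d _ g1] by blast
      qed
    qed
    then show ?case using W'L W'X W'nX by blast
  qed
  obtain W where W: "W \<in> L" "cle W X" "W \<noteq> X" "\<forall>p\<in>P. ple p (xp X p) (xp W p)"
    using claim[OF finP] by blast
  have "cle X W" using K[OF XL W(1)] W(4) by blast
  then show False using le_antisym[OF W(1) XL W(2)] W(3) by simp
qed

definition "chp X = (SOME p. p \<in> P \<and> (\<forall>Y\<in>L. ple p (xp X p) (xp Y p) \<longrightarrow> cle X Y))"

lemma chp: "X \<in> J_L E src dst s t P \<Longrightarrow> chp X \<in> P \<and> (\<forall>Y\<in>L. ple (chp X) (xp X (chp X)) (xp Y (chp X)) \<longrightarrow> cle X Y)"
proof -
  assume a: "X \<in> J_L E src dst s t P"
  have "\<exists>p. p \<in> P \<and> (\<forall>Y\<in>L. ple p (xp X p) (xp Y p) \<longrightarrow> cle X Y)" using irr_key[OF a] by blast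
  from someI_ex[OF this] show ?thesis unfolding chp_def .
qed

lemma inj_aux: assumes X: "X \<in> L" and X': "X' \<in> L" and pP: "p \<in> P" and p'P: "p' \<in> P"
  and v: "src (xp X p) = src (xp X' p')" shows "ple p (xp X p) (xp X' p)"
proof (rule ccontr)
  assume n: "\<not> ple p (xp X p) (xp X' p)"
  obtain f x' where fx: "f = xp X p" "x' = xp X' p" by blast
  have fin: "f \<in> set p" "x' \<in> set p" using xp_in[OF X pP] xp_in[OF X' pP] fx by auto
  have h: "ple p (xp X' p) f" "f \<noteq> xp X' p" using n ple_total[OF fin] ple_refl[OF fin(1)] fx by auto
  obtain y where y: "y = xp X' p'" by blast
  have X'p': "X' \<inter> set p' = {y}" using xp[OF X' p'P] y by simp
  have yin: "y \<in> set p'" using X'p' by auto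
  then obtain c d where p': "p' = c @ y # d" by (meson split_list)
  have dp: "distinct p'" "ew s p' t" using P_props[OF p'P] by auto
  have "ew s (c @ y # d) t" using dp(2) p' by simp
  then have cw: "ew s c (src y)" by (simp only: gw_split)
  have "y \<notin> set c" using dp(1) p' by simp
  then have cX: "set c \<inter> X' = {}" using X'p' p' by auto
  have "src y = src f" using v fx y by simp
  then have cw2: "ew s c (src f)" using cw by simp
  show False using L1[OF X' pP fin(1) h cw2 cX] .
qed

lemma card_JL: "card (J_L E src dst s t P) \<le> card V"
proof -
  let ?f = "\<lambda>X. src (xp X (chp X))"
  have "inj_on ?f (J_L E src dst s t P)"
  proof (rule inj_onI)
    fix X X' assume a: "X \<in> J_L E src dst s t P" "X' \<in> J_L E src dst s t P" "?f X = ?f X'"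
    have XL: "X \<in> L" and X'L: "X' \<in> L" using a(1,2) JL_def2 by blast+
    have c1: "chp X \<in> P" "\<forall>Y\<in>L. ple (chp X) (xp X (chp X)) (xp Y (chp X)) \<longrightarrow> cle X Y" using chp[OF a(1)] by blast+
    have c2: "chp X' \<in> P" "\<forall>Y\<in>L. ple (chp X') (xp X' (chp X')) (xp Y (chp X')) \<longrightarrow> cle X' Y" using chp[OF a(2)] by blast+
    have "ple (chp X) (xp X (chp X)) (xp X' (chp X))" using inj_aux[OF XL X'L c1(1) c2(1)] a(3) by simp
    then have l1: "cle X X'" using c1(2) X'L by blast
    have "ple (chp X') (xp X' (chp X')) (xp X (chp X'))" using inj_aux[OF X'L XL c2(1) c1(1)] a(3) by simp
    then have l2: "cle X' X" using c2(2) XL by blast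
    show "X = X'" using le_antisym[OF XL X'L l1 l2] .
  qed
  moreover have "?f ` J_L E src dst s t P \<subseteq> V"
  proof
    fix v assume "v \<in> ?f ` J_L E src dst s t P"
    then obtain X where X: "X \<in> J_L E src dst s t P" "v = ?f X" by blast
    have "X \<in> L" using X(1) JL_def2 by blast
    then have "xp X (chp X) \<in> E" using xp_in chp[OF X(1)] P_props by blast
    then show "v \<in> V" using dg X(2) unfolding digraph_def by blast
  qed
  ultimately show ?thesis using card_inj_on_le finV by blast
qed

lemma finJL: "finite (J_L E src dst s t P)"
proof -
  have "J_L E src dst s t P \<subseteq> Pow E" using JL_def2 L_cut unfolding is_cut_def by blast
  then show ?thesis using finE finite_subset by blast
qed

lemma card_Jstar: assumes k: "k \<ge> 1" shows "card (J_star E src dst s t P k) \<le> k * card V"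
proof -
  have "card (J_star E src dst s t P k) \<le> (\<Sum>i\<in>{1..k}. card (J_i E src dst s t P k i))"
    unfolding Jstar_eq[OF k] by (rule card_UN_le) simp
  also have "\<dots> \<le> (\<Sum>i\<in>{1..k}. card (J_L E src dst s t P))"
  proof (rule sum_mono)
    fix i assume "i \<in> {1..k}"
    have "J_i E src dst s t P k i = (\<lambda>p. replicate (i - 1) (zero_L E src dst s t) @ replicate (k - i + 1) p) ` J_L E src dst s t P"
      unfolding J_i_def by blast
    then show "card (J_i E src dst s t P k i) \<le> card (J_L E src dst s t P)" using card_image_le[OF finJL] by simp
  qed
  also have "\<dots> = k * card (J_L E src dst s t P)" by simp
  also have "\<dots> \<le> k * card V" using card_JL by simp
  finally show ?thesis .
qed

end

theorem lemma6:
  shows "\<exists>C::nat. \<forall>(V::nat set) (E::nat set) (src::nat \<Rightarrow> nat) (dst::nat \<Rightarrow> nat) s t P (k::nat).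
     digraph V E src dst \<and> s \<in> V \<and> t \<in> V \<and> s \<noteq> t \<and>
     max_path_packing E src dst s t P \<and> k \<ge> 1 \<longrightarrow>
       J_star E src dst s t P k = (\<Union>i\<in>{1..k}. J_i E src dst s t P k i) \<and>
       card (J_star E src dst s t P k) \<le> C * k * card V"
proof (intro exI[of _ 1] allI impI)
  fix V E src dst s t P k
  assume a: "digraph V E src dst \<and> s \<in> V \<and> t \<in> V \<and> s \<noteq> t \<and> max_path_packing E src dst s t P \<and> (k::nat) \<ge> 1"
  then interpret mc V E src dst s t P by unfold_locales blast+
  show "J_star E src dst s t P k = (\<Union>i\<in>{1..k}. J_i E src dst s t P k i) \<and>
       card (J_star E src dst s t P k) \<le> 1 * k * card V"
    using Jstar_eq card_Jstar a by simp
qed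


end
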